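(* Let $X$, $Y$, $Z$ be positive, absolutely continuous random variables with densities $f_X$, $f_Y$, $f_Z$, such that $X$ and $Y$ are independent and $Z \stackrel{d}{=} X/(X+Y)$ (so $Z$ takes values in $(0,1)$). Suppose that the density of $Y$ admits the decomposition $$f_Y(sx)=\mathbb{A}(s)\,\mathbb{B}(x)\,\mathbb{C}(sx),\qquad x,s>0,$$ for some positive real-valued functions $\mathbb{A},\mathbb{B},\mathbb{C}$ on $(0,\infty)$, where $$\mathbb{C}(x)=(p+qx)\exp(-\lambda x),\qquad x>0,$$ for some constants $q,\lambda>0$ and $p\geq 0$. Then, whenever $\big[x^{(\lambda p/q)+2}\,\mathbb{B}(x)\,f_X(x)\big]\big|_{x=0^+}=0$ (i.e. this expression tends to $0$ as $x\to 0^+$), the density of $X$ is given, for $x>0$, by $$f_X(x)=\frac{\lambda^3}{q\,x^{(\lambda p/q)+2}\,\mathbb{B}(x)}\int_0^x \xi^{\lambda p/q}\,\mathcal{L}^{-1}\left\{\frac{1}{\mathbb{A}\!\left(\frac{s}{\lambda}\right)(s+\lambda)^2}\, f_Z\!\left(\frac{\lambda}{s+\lambda}\right)\right\}(\xi)\,\mathrm{d}\xi.$$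
   Context: $\mathcal{L}$ denotes the Laplace transform, $\mathcal{L}\{g\}(s)=\int_0^\infty e^{-st}g(t)\,\mathrm{d}t$, and $\mathcal{L}^{-1}$ denotes the inverse Laplace transform: $\mathcal{L}^{-1}\{F\}$ is the function $g$ on $(0,\infty)$ with $\mathcal{L}\{g\}=F$; $\mathcal{L}^{-1}\{F\}(\xi)$ means this function evaluated at $\xi$. The notation $\stackrel{d}{=}$ means equality in distribution. *)

theory Defs
  imports "HOL-Probability.Probability"
begin

text \<open>Thus "g = inverse Laplace transform of F".\<close>
definition has_laplace :: "(real \<Rightarrow> real) \<Rightarrow> (real \<Rightarrow> real) \<Rightarrow> bool" where
  "has_laplace g F \<longleftrightarrow>
     (\<forall>s>0. set_integrable lborel {0<..} (\<lambda>t. exp (- s * t) * g t) \<and>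
            (LINT t:{0<..}|lborel. exp (- s * t) * g t) = F s)"

end

theory Submission
  imports Defs "HOL-Probability.Probability"
begin


lemma swap_tri:
  fixes G K :: "real \<Rightarrow> ennreal"
  assumes [measurable]: "G \<in> borel_measurable borel" "K \<in> borel_measurable borel"
  shows "(\<integral>\<^sup>+t. K t * (\<integral>\<^sup>+\<xi>. G \<xi> * indicator {0<..t} \<xi> \<partial>lborel) \<partial>lborel) =
         (\<integral>\<^sup>+\<xi>. G \<xi> * indicator {0<..} \<xi> * (\<integral>\<^sup>+t. K t * indicator {\<xi>..} t \<partial>lborel) \<partial>lborel)"
proof -
  have "(\<integral>\<^sup>+t. K t * (\<integral>\<^sup>+\<xi>. G \<xi> * indicator {0<..t} \<xi> \<partial>lborel) \<partial>lborel) =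
        (\<integral>\<^sup>+t. \<integral>\<^sup>+\<xi>. K t * G \<xi> * (if 0 < \<xi> \<and> \<xi> \<le> t then 1 else 0) \<partial>lborel \<partial>lborel)"
    by (intro nn_integral_cong, subst nn_integral_cmult[symmetric])
       (auto intro!: nn_integral_cong simp: indicator_def mult.assoc)
  also have "\<dots> = (\<integral>\<^sup>+\<xi>. \<integral>\<^sup>+t. K t * G \<xi> * (if 0 < \<xi> \<and> \<xi> \<le> t then 1 else 0) \<partial>lborel \<partial>lborel)"
    by (subst lborel_pair.Fubini') (auto simp: case_prod_unfold)
  also have "\<dots> = (\<integral>\<^sup>+\<xi>. G \<xi> * indicator {0<..} \<xi> * (\<integral>\<^sup>+t. K t * indicator {\<xi>..} t \<partial>lborel) \<partial>lborel)"
    by (intro nn_integral_cong, subst nn_integral_cmult[symmetric])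
       (auto intro!: nn_integral_cong simp: indicator_def mult_ac)
  finally show ?thesis .
qed



lemma int_psiG:
  fixes \<psi> G :: "real \<Rightarrow> real"
  assumes [measurable]: "\<psi> \<in> borel_measurable borel" "G \<in> borel_measurable borel"
    and int: "integrable lborel \<psi>" and supp: "\<And>t. t \<le> 0 \<Longrightarrow> \<psi> t = 0"
    and bd: "\<And>u. 0 \<le> u \<Longrightarrow> u \<le> 1 \<Longrightarrow> \<bar>G u\<bar> \<le> c"
  shows "integrable lborel (\<lambda>t. \<psi> t * G (exp (-t)))"
proof (rule Bochner_Integration.integrable_bound[of lborel "\<lambda>t. c * \<psi> t"])
  show "integrable lborel (\<lambda>t. c * \<psi> t)" using int by simp
  show "AE t in lborel. norm (\<psi> t * G (exp (-t))) \<le> norm (c * \<psi> t)"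
  proof (intro AE_I2)
    fix t :: real
    have c0: "0 \<le> c" using bd[of 0] by auto
    show "norm (\<psi> t * G (exp (-t))) \<le> norm (c * \<psi> t)"
    proof (cases "t \<le> 0")
      case True then show ?thesis using supp by simp
    next
      case False
      then have "\<bar>G (exp (-t))\<bar> \<le> c" by (intro bd) auto
      from mult_right_mono[OF this abs_ge_zero[of "\<psi> t"]]
      show ?thesis using c0 by (simp add: abs_mult mult.commute)
    qed
  qed
qed measurable

lemma lerch_core:
  fixes \<psi> :: "real \<Rightarrow> real"
  assumes [measurable]: "\<psi> \<in> borel_measurable borel" and int: "integrable lborel \<psi>"
    and supp: "\<And>t. t \<le> 0 \<Longrightarrow> \<psi> t = 0"
    and mom: "\<And>n::nat. (\<integral>t. \<psi> t * exp (-t) ^ n \<partial>lborel) = 0"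
  shows "AE t in lborel. \<psi> t = 0"
proof -
  have intpow: "integrable lborel (\<lambda>t. \<psi> t * exp (-t) ^ n)" for n
    using int_psiG[OF _ _ int supp, of "\<lambda>u. u ^ n" 1] by (simp add: power_le_one)
  have poly: "(\<integral>t. \<psi> t * (\<Sum>i\<le>N. a i * exp (-t) ^ i) \<partial>lborel) = 0" for a N
  proof -
    have "(\<integral>t. \<psi> t * (\<Sum>i\<le>N. a i * exp (-t) ^ i) \<partial>lborel)
        = (\<integral>t. (\<Sum>i\<le>N. a i * (\<psi> t * exp (-t) ^ i)) \<partial>lborel)"
      by (simp add: sum_distrib_left mult_ac)
    also have "\<dots> = (\<Sum>i\<le>N. a i * (\<integral>t. \<psi> t * exp (-t) ^ i \<partial>lborel))"
      using intpow by (simp add: integral_sum)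
    also have "\<dots> = 0" using mom by simp
    finally show ?thesis .
  qed
  have cont: "(\<integral>t. \<psi> t * F (exp (-t)) \<partial>lborel) = 0" if cF: "continuous_on UNIV F" for F :: "real \<Rightarrow> real"
  proof -
    have [measurable]: "F \<in> borel_measurable borel"
      using cF by (rule borel_measurable_continuous_onI)
    have "bounded (F ` {0..1})"
      using compact_imp_bounded[OF compact_continuous_image[OF continuous_on_subset[OF cF] compact_Icc, of 0 1]] by simp
    then obtain c where "\<forall>y\<in>F ` {0..1}. norm y \<le> c" unfolding bounded_iff by auto
    then have c: "\<And>u. u \<in> {0..1} \<Longrightarrow> norm (F u) \<le> c" by auto
    have intF: "integrable lborel (\<lambda>t. \<psi> t * F (exp (-t)))"
      by (rule int_psiG[OF _ _ int supp, of F c]) (use c in auto)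
    define I where "I = (\<integral>t. \<psi> t * F (exp (-t)) \<partial>lborel)"
    define J where "J = (\<integral>t. \<bar>\<psi> t\<bar> \<partial>lborel)"
    have "\<bar>I\<bar> \<le> e * J" if e: "e > 0" for e
    proof -
      obtain P where P: "real_polynomial_function P" "\<And>u. u \<in> {0..1} \<Longrightarrow> \<bar>F u - P u\<bar> < e"
        using Stone_Weierstrass_real_polynomial_function[of "{0..1::real}" F e] e
          continuous_on_subset[OF cF] by auto
      obtain a N where aN: "P = (\<lambda>x. \<Sum>i\<le>N. a i * x ^ i)"
        using P(1) real_polynomial_function_iff_sum by auto
      have intP: "integrable lborel (\<lambda>t. \<psi> t * P (exp (-t)))"
      proof -
        have "integrable lborel (\<lambda>t. \<Sum>i\<le>N. a i * (\<psi> t * exp (-t) ^ i))"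
          by (rule Bochner_Integration.integrable_sum) (simp add: intpow)
        then show ?thesis unfolding aN by (simp add: sum_distrib_left mult_ac)
      qed
      have "I = (\<integral>t. \<psi> t * (F (exp (-t)) - P (exp (-t))) \<partial>lborel)"
        using poly[of a N] intF intP unfolding I_def aN by (simp add: right_diff_distrib)
      also have "\<bar>\<dots>\<bar> \<le> (\<integral>t. e * \<bar>\<psi> t\<bar> \<partial>lborel)"
      proof (rule integral_abs_bound_integral)
        show "integrable lborel (\<lambda>t. \<psi> t * (F (exp (-t)) - P (exp (-t))))"
          using intF intP by (simp add: right_diff_distrib)
        show "integrable lborel (\<lambda>t. e * \<bar>\<psi> t\<bar>)" using int by simp
        fix t :: real
        show "\<bar>\<psi> t * (F (exp (- t)) - P (exp (- t)))\<bar> \<le> e * \<bar>\<psi> t\<bar>"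
        proof (cases "t \<le> 0")
          case True then show ?thesis using supp by simp
        next
          case False
          then have "\<bar>F (exp (-t)) - P (exp (-t))\<bar> \<le> e" using P(2)[of "exp (-t)"] by auto
          from mult_right_mono[OF this abs_ge_zero[of "\<psi> t"]]
          show ?thesis by (simp add: abs_mult mult.commute)
        qed
      qed
      also have "\<dots> = e * J" unfolding J_def by simp
      finally show ?thesis .
    qed
    then have "\<bar>I\<bar> \<le> 0"
    proof -
      assume h: "\<And>e. e > 0 \<Longrightarrow> \<bar>I\<bar> \<le> e * J"
      have J0: "J \<ge> 0" unfolding J_def by simp
      show ?thesis
      proof (rule field_le_epsilon)
        fix e :: real assume "e > 0"
        show "\<bar>I\<bar> \<le> 0 + e"
        proof -
          have "\<bar>I\<bar> \<le> e / (J + 1) * J" using h[of "e / (J + 1)"] J0 \<open>e > 0\<close> by simp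
          also have "\<dots> \<le> e / (J + 1) * (J + 1)" using J0 \<open>e > 0\<close> by (intro mult_left_mono) auto
          also have "\<dots> = e" using J0 by simp
          finally show ?thesis by simp
        qed
      qed
    qed
    then show ?thesis unfolding I_def by simp
  qed
  have half: "(\<integral>t. \<psi> t * indicator {x<..} t \<partial>lborel) = 0" for x :: real
  proof -
    define F where "F k u = max 0 (min 1 (real (Suc k) * (exp (-x) - u)))" for k :: nat and u :: real
    have cF: "continuous_on UNIV (F k)" for k unfolding F_def by (intro continuous_intros)
    have "(\<lambda>k. \<integral>t. \<psi> t * F k (exp (-t)) \<partial>lborel) \<longlonglongrightarrow> (\<integral>t. \<psi> t * indicator {x<..} t \<partial>lborel)"
    proof (rule integral_dominated_convergence[where w="\<lambda>t. \<bar>\<psi> t\<bar>"])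
      show "(\<lambda>t. \<psi> t * indicator {x<..} t) \<in> borel_measurable lborel" by measurable
      show "(\<lambda>t. \<psi> t * F k (exp (-t))) \<in> borel_measurable lborel" for k
        using borel_measurable_continuous_onI[OF cF[of k]] by measurable
      show "integrable lborel (\<lambda>t. \<bar>\<psi> t\<bar>)" using int by simp
      show "AE t in lborel. norm (\<psi> t * F k (exp (-t))) \<le> \<bar>\<psi> t\<bar>" for k
      proof (intro AE_I2)
        fix t :: real
        have "0 \<le> F k (exp (-t))" "F k (exp (-t)) \<le> 1" unfolding F_def by auto
        then have "\<bar>F k (exp (-t))\<bar> \<le> 1" by simp
        from mult_left_mono[OF this abs_ge_zero[of "\<psi> t"]]
        show "norm (\<psi> t * F k (exp (-t))) \<le> \<bar>\<psi> t\<bar>" by (simp add: abs_mult)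
      qed
      show "AE t in lborel. (\<lambda>k. \<psi> t * F k (exp (-t))) \<longlonglongrightarrow> \<psi> t * indicator {x<..} t"
      proof (intro AE_I2)
        fix t :: real
        show "(\<lambda>k. \<psi> t * F k (exp (-t))) \<longlonglongrightarrow> \<psi> t * indicator {x<..} t"
        proof (cases "x < t")
          case True
          then have d: "exp (-x) - exp (-t) > 0" by simp
          obtain k0 :: nat where k0: "1 / (exp (-x) - exp (-t)) < k0"
            using reals_Archimedean2 by blast
          have "eventually (\<lambda>k. F k (exp (-t)) = 1) sequentially"
            unfolding eventually_sequentially
          proof (intro exI allI impI)
            fix k assume "k0 \<le> k"
            then have "1 / (exp (-x) - exp (-t)) < real (Suc k)" using k0 by linarith
            then have "1 \<le> real (Suc k) * (exp (-x) - exp (-t))"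
              using d by (simp add: divide_less_eq less_imp_le mult.commute)
            then show "F k (exp (-t)) = 1" unfolding F_def by simp
          qed
          then have "(\<lambda>k. F k (exp (-t))) \<longlonglongrightarrow> 1"
            by (rule tendsto_eventually)
          then have "(\<lambda>k. \<psi> t * F k (exp (-t))) \<longlonglongrightarrow> \<psi> t * 1"
            by (intro tendsto_mult tendsto_const)
          then show ?thesis using True by simp
        next
          case False
          then have d: "exp (-x) - exp (-t) \<le> 0" by simp
          have "F k (exp (-t)) = 0" for k
          proof -
            have "real (Suc k) * (exp (-x) - exp (-t)) \<le> 0" using d by (simp add: mult_nonneg_nonpos)
            then show ?thesis unfolding F_def by simp
          qed
          then show ?thesis using False by simp
        qed
      qed
    qed
    moreover have "(\<integral>t. \<psi> t * F k (exp (-t)) \<partial>lborel) = 0" for k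
      using cont[OF cF] .
    ultimately show ?thesis by (simp add: LIMSEQ_const_iff)
  qed
  define Pp where "Pp = density lborel (\<lambda>t. ennreal (max 0 (\<psi> t)))"
  define Pn where "Pn = density lborel (\<lambda>t. ennreal (max 0 (- \<psi> t)))"
  have intp: "integrable lborel (\<lambda>t. max 0 (\<psi> t))" and intn: "integrable lborel (\<lambda>t. max 0 (- \<psi> t))"
    using int by auto
  have emgen: "emeasure (density lborel (\<lambda>t. ennreal (f t))) {x<..} = ennreal (\<integral>t. f t * indicator {x<..} t \<partial>lborel)"
    if [measurable]: "f \<in> borel_measurable borel" and fi: "integrable lborel f" and f0: "\<And>t. f t \<ge> 0" for f and x :: real
  proof -
    have "emeasure (density lborel (\<lambda>t. ennreal (f t))) {x<..} = (\<integral>\<^sup>+t. ennreal (f t) * indicator {x<..} t \<partial>lborel)"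
      by (simp add: emeasure_density)
    also have "\<dots> = (\<integral>\<^sup>+t. ennreal (f t * indicator {x<..} t) \<partial>lborel)"
      by (intro nn_integral_cong) (simp add: indicator_def)
    also have "\<dots> = ennreal (\<integral>t. f t * indicator {x<..} t \<partial>lborel)"
      by (intro nn_integral_eq_integral integrable_real_mult_indicator fi AE_I2) (auto simp: f0)
    finally show ?thesis .
  qed
  have emP: "emeasure Pp {x<..} = ennreal (\<integral>t. max 0 (\<psi> t) * indicator {x<..} t \<partial>lborel)"
    and emN: "emeasure Pn {x<..} = ennreal (\<integral>t. max 0 (- \<psi> t) * indicator {x<..} t \<partial>lborel)" for x :: real
    unfolding Pp_def Pn_def by (rule emgen; (simp add: intp intn)?)+
  have "Pp = Pn"
  proof (rule measure_eqI_lessThan)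
    show "sets Pp = sets borel" "sets Pn = sets borel" unfolding Pp_def Pn_def by auto
    show "emeasure Pp {x<..} < \<infinity>" for x unfolding emP by simp
    show "emeasure Pp {x<..} = emeasure Pn {x<..}" for x
    proof -
      have "(\<integral>t. max 0 (\<psi> t) * indicator {x<..} t \<partial>lborel) - (\<integral>t. max 0 (- \<psi> t) * indicator {x<..} t \<partial>lborel)
          = (\<integral>t. \<psi> t * indicator {x<..} t \<partial>lborel)"
      proof -
        have ip: "integrable lborel (\<lambda>t. max 0 (\<psi> t) * indicator {x<..} t)"
          by (rule integrable_real_mult_indicator) (auto simp: intp)
        have iN: "integrable lborel (\<lambda>t. max 0 (- \<psi> t) * indicator {x<..} t)"
          by (rule integrable_real_mult_indicator) (auto simp: intn)
        show ?thesis
          by (subst Bochner_Integration.integral_diff[symmetric, OF ip iN])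
             (auto intro!: Bochner_Integration.integral_cong simp: indicator_def)
      qed
      then show ?thesis unfolding emP emN using half[of x] by simp
    qed
  qed
  then have "AE t in lborel. ennreal (max 0 (\<psi> t)) = ennreal (max 0 (- \<psi> t))"
    unfolding Pp_def Pn_def by (intro sigma_finite_measure.density_unique[OF sigma_finite_lborel]) auto
  then show ?thesis
    by eventually_elim (auto simp: max_def split: if_splits)
qed



lemma laplace_isCont:
  fixes \<phi> :: "real \<Rightarrow> real"
  assumes [measurable]: "\<phi> \<in> borel_measurable borel"
    and int: "\<And>s. s > 0 \<Longrightarrow> set_integrable lborel {0<..} (\<lambda>t. exp (-s*t) * \<phi> t)"
    and s0: "s0 > 0"
  shows "isCont (\<lambda>s. LINT t:{0<..}|lborel. exp (-s*t) * \<phi> t) s0"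
proof (rule continuous_at_sequentiallyI)
  fix x :: "nat \<Rightarrow> real" assume x: "x \<longlonglongrightarrow> s0"
  have "eventually (\<lambda>n. x n > s0 / 2) sequentially"
    using x s0 by (intro order_tendstoD) auto
  then obtain N where N: "\<And>n. n \<ge> N \<Longrightarrow> x n > s0 / 2" unfolding eventually_sequentially by auto
  have w: "integrable lborel (\<lambda>t. indicator {0<..} t * \<bar>exp (-(s0/2)*t) * \<phi> t\<bar>)"
  proof -
    have "integrable lborel (\<lambda>t. indicator {0<..} t *\<^sub>R (exp (-(s0/2)*t) * \<phi> t))"
      using int[of "s0/2"] s0 unfolding set_integrable_def by simp
    then have "integrable lborel (\<lambda>t. \<bar>indicator {0<..} t *\<^sub>R (exp (-(s0/2)*t) * \<phi> t)\<bar>)"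
      by (rule integrable_abs)
    moreover have "\<bar>indicator {0<..} t *\<^sub>R (exp (-(s0/2)*t) * \<phi> t)\<bar> = indicator {0<..} t * \<bar>exp (-(s0/2)*t) * \<phi> t\<bar>" for t :: real
      by (simp add: indicator_def)
    ultimately show ?thesis by simp
  qed
  have "(\<lambda>n. \<integral>t. indicator {0<..} t *\<^sub>R (exp (-x (n+N)*t) * \<phi> t) \<partial>lborel) \<longlonglongrightarrow>
        (\<integral>t. indicator {0<..} t *\<^sub>R (exp (-s0*t) * \<phi> t) \<partial>lborel)"
  proof (rule integral_dominated_convergence[OF _ _ w])
    show "AE t in lborel. (\<lambda>n. indicator {0<..} t *\<^sub>R (exp (-x (n+N)*t) * \<phi> t)) \<longlonglongrightarrow> indicator {0<..} t *\<^sub>R (exp (-s0*t) * \<phi> t)"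
    proof (intro AE_I2)
      fix t :: real
      have "(\<lambda>n. x (n+N)) \<longlonglongrightarrow> s0" using LIMSEQ_ignore_initial_segment[OF x, of N] .
      then have "(\<lambda>n. exp (-x (n+N)*t) * \<phi> t) \<longlonglongrightarrow> exp (-s0*t) * \<phi> t"
        by (intro tendsto_mult tendsto_const tendsto_exp tendsto_mult tendsto_minus)
      then show "(\<lambda>n. indicator {0<..} t *\<^sub>R (exp (-x (n+N)*t) * \<phi> t)) \<longlonglongrightarrow> indicator {0<..} t *\<^sub>R (exp (-s0*t) * \<phi> t)"
        by (intro tendsto_scaleR tendsto_const)
    qed
    show "AE t in lborel. norm (indicator {0<..} t *\<^sub>R (exp (-x (n+N)*t) * \<phi> t)) \<le> indicator {0<..} t * \<bar>exp (-(s0/2)*t) * \<phi> t\<bar>" for n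
    proof (intro AE_I2)
      fix t :: real
      show "norm (indicator {0<..} t *\<^sub>R (exp (-x (n+N)*t) * \<phi> t)) \<le> indicator {0<..} t * \<bar>exp (-(s0/2)*t) * \<phi> t\<bar>"
      proof (cases "t > 0")
        case True
        have "exp (-x (n+N)*t) \<le> exp (-(s0/2)*t)" using N[of "n+N"] True by (simp add: mult_right_mono)
        then show ?thesis using True by (simp add: abs_mult mult_right_mono)
      qed simp
    qed
  qed measurable
  then have "(\<lambda>n. LINT t:{0<..}|lborel. exp (-x (n+N)*t) * \<phi> t) \<longlonglongrightarrow> (LINT t:{0<..}|lborel. exp (-s0*t) * \<phi> t)"
    by (simp add: set_lebesgue_integral_def)
  then show "(\<lambda>n. LINT t:{0<..}|lborel. exp (-x n*t) * \<phi> t) \<longlonglongrightarrow> (LINT t:{0<..}|lborel. exp (-s0*t) * \<phi> t)"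
    by (rule LIMSEQ_offset)
qed

lemma ae_zero_cont:
  fixes L :: "real \<Rightarrow> real"
  assumes cont: "\<And>s. s > 0 \<Longrightarrow> isCont L s" and ae: "AE s in lborel. s > 0 \<longrightarrow> L s = 0" and s0: "s0 > 0"
  shows "L s0 = 0"
proof (rule ccontr)
  assume ne: "L s0 \<noteq> 0"
  obtain e where e: "e > 0" "\<And>y. dist s0 y < e \<Longrightarrow> L y \<noteq> 0"
    using continuous_at_avoid[OF cont[OF s0] ne] by blast
  define d where "d = min e s0"
  have d: "d > 0" "d \<le> e" "d \<le> s0" using e s0 by (auto simp: d_def)
  from ae obtain N where N: "{s \<in> space lborel. \<not> (s > 0 \<longrightarrow> L s = 0)} \<subseteq> N" "emeasure lborel N = 0" "N \<in> sets lborel"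
    by (auto elim!: AE_E)
  have "{s0 - d<..<s0 + d} \<subseteq> N"
  proof
    fix y assume y: "y \<in> {s0 - d<..<s0 + d}"
    then have "dist s0 y < e" using d by (auto simp: dist_real_def)
    then have "L y \<noteq> 0" by (rule e(2))
    moreover have "y > 0" using y d by auto
    ultimately show "y \<in> N" using N(1) by auto
  qed
  then have "emeasure lborel {s0 - d<..<s0 + d} \<le> emeasure lborel N" by (intro emeasure_mono N)
  then show False using N(2) d by simp
qed

lemma lerch_laplace:
  fixes \<phi> :: "real \<Rightarrow> real"
  assumes [measurable]: "\<phi> \<in> borel_measurable borel"
    and int: "\<And>s. s > 0 \<Longrightarrow> set_integrable lborel {0<..} (\<lambda>t. exp (-s*t) * \<phi> t)"
    and ae: "AE s in lborel. s > 0 \<longrightarrow> (LINT t:{0<..}|lborel. exp (-s*t) * \<phi> t) = 0"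
  shows "AE t in lborel. t > 0 \<longrightarrow> \<phi> t = 0"
proof -
  have z: "(LINT t:{0<..}|lborel. exp (-s*t) * \<phi> t) = 0" if "s > 0" for s
    by (rule ae_zero_cont[OF laplace_isCont[OF _ int] ae that]) auto
  define \<psi> where "\<psi> t = indicator {0<..} t * (exp (-1*t) * \<phi> t)" for t
  have "AE t in lborel. \<psi> t = 0"
  proof (rule lerch_core)
    show "\<psi> \<in> borel_measurable borel" unfolding \<psi>_def by measurable
    show "integrable lborel \<psi>" using int[of 1] unfolding \<psi>_def set_integrable_def by simp
    show "\<psi> t = 0" if "t \<le> 0" for t using that by (simp add: \<psi>_def)
    fix n :: nat
    have "(\<integral>t. \<psi> t * exp (-t) ^ n \<partial>lborel) = (LINT t:{0<..}|lborel. exp (-(real n + 1)*t) * \<phi> t)"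
      unfolding set_lebesgue_integral_def \<psi>_def
      by (intro Bochner_Integration.integral_cong refl)
         (auto simp: exp_of_nat_mult[symmetric] algebra_simps simp flip: exp_add)
    also have "\<dots> = 0" by (rule z) simp
    finally show "(\<integral>t. \<psi> t * exp (-t) ^ n \<partial>lborel) = 0" .
  qed
  then show ?thesis by eventually_elim (auto simp: \<psi>_def indicator_def)
qed



lemma nn_exp_tail:
  assumes "s > 0"
  shows "(\<integral>\<^sup>+t. ennreal (exp (-s*t)) * indicator {\<xi>..} t \<partial>lborel) = ennreal (exp (-s*\<xi>) / s)"
proof -
  have "(\<integral>\<^sup>+t. ennreal (exp (-s*t)) * indicator {\<xi>..} t \<partial>lborel) = (\<integral>\<^sup>+t. ennreal (indicator {\<xi>..} t * exp (-s*t)) \<partial>lborel)"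
    by (intro nn_integral_cong) (simp add: indicator_def)
  also have "\<dots> = ennreal (exp (-s*\<xi>) / s)"
    by (intro nn_integral_has_integral_lebesgue has_integral_exp_minus_to_infinity assms) simp
  finally show ?thesis .
qed

lemma nn_powr_int:
  assumes "0 < \<xi>" "\<xi> \<le> x" "a \<ge> 0"
  shows "(\<integral>\<^sup>+t. ennreal (a * t powr (a-1)) * indicator {\<xi>..x} t \<partial>lborel) = ennreal (x powr a - \<xi> powr a)"
proof -
  have "(\<integral>\<^sup>+t. ennreal (a * t powr (a-1)) * indicator {\<xi>..x} t \<partial>lborel) = (\<integral>\<^sup>+t. ennreal (indicator {\<xi>..x} t * (a * t powr (a-1))) \<partial>lborel)"
    by (intro nn_integral_cong) (simp add: indicator_def)
  also have "\<dots> = ennreal (x powr a - \<xi> powr a)"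
  proof (intro nn_integral_has_integral_lebesgue)
    show "0 \<le> a * t powr (a-1)" for t using assms by simp
    show "((\<lambda>t. a * t powr (a-1)) has_integral x powr a - \<xi> powr a) {\<xi>..x}"
    proof (rule fundamental_theorem_of_calculus)
      show "\<xi> \<le> x" by fact
      fix t assume t: "t \<in> {\<xi>..x}"
      then have "t > 0" using assms by auto
      then show "((\<lambda>t. t powr a) has_vector_derivative a * t powr (a-1)) (at t within {\<xi>..x})"
        by (auto intro!: derivative_eq_intros simp flip: has_real_derivative_iff_has_vector_derivative)
    qed
  qed
  finally show ?thesis .
qed

lemma swap_exp:
  fixes G :: "real \<Rightarrow> ennreal"
  assumes [measurable]: "G \<in> borel_measurable borel" and s: "s > 0"
  shows "(\<integral>\<^sup>+t. ennreal (exp (-s*t)) * indicator {0<..} t * (\<integral>\<^sup>+\<xi>. G \<xi> * indicator {0<..t} \<xi> \<partial>lborel) \<partial>lborel) =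
         (\<integral>\<^sup>+\<xi>. G \<xi> * indicator {0<..} \<xi> * ennreal (exp (-s*\<xi>) / s) \<partial>lborel)"
proof -
  have "(\<integral>\<^sup>+t. ennreal (exp (-s*t)) * indicator {0<..} t * (\<integral>\<^sup>+\<xi>. G \<xi> * indicator {0<..t} \<xi> \<partial>lborel) \<partial>lborel) =
        (\<integral>\<^sup>+\<xi>. G \<xi> * indicator {0<..} \<xi> * (\<integral>\<^sup>+t. (ennreal (exp (-s*t)) * indicator {0<..} t) * indicator {\<xi>..} t \<partial>lborel) \<partial>lborel)"
    by (rule swap_tri) auto
  also have "\<dots> = (\<integral>\<^sup>+\<xi>. G \<xi> * indicator {0<..} \<xi> * ennreal (exp (-s*\<xi>) / s) \<partial>lborel)"
  proof (intro nn_integral_cong)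
    fix \<xi> :: real
    show "G \<xi> * indicator {0<..} \<xi> * (\<integral>\<^sup>+t. (ennreal (exp (-s*t)) * indicator {0<..} t) * indicator {\<xi>..} t \<partial>lborel) =
          G \<xi> * indicator {0<..} \<xi> * ennreal (exp (-s*\<xi>) / s)"
    proof (cases "\<xi> > 0")
      case True
      have "(\<integral>\<^sup>+t. (ennreal (exp (-s*t)) * indicator {0<..} t) * indicator {\<xi>..} t \<partial>lborel) =
            (\<integral>\<^sup>+t. ennreal (exp (-s*t)) * indicator {\<xi>..} t \<partial>lborel)"
        using True by (intro nn_integral_cong) (auto simp: indicator_def)
      then show ?thesis using nn_exp_tail[OF s] by simp
    qed simp
  qed
  finally show ?thesis .
qed

lemma swap_pow:
  fixes G :: "real \<Rightarrow> ennreal"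
  assumes [measurable]: "G \<in> borel_measurable borel" and a: "a \<ge> 0"
  shows "(\<integral>\<^sup>+t. ennreal (a * t powr (a-1)) * indicator {0<..x} t * (\<integral>\<^sup>+\<xi>. G \<xi> * indicator {0<..t} \<xi> \<partial>lborel) \<partial>lborel) =
         (\<integral>\<^sup>+\<xi>. G \<xi> * indicator {0<..x} \<xi> * ennreal (x powr a - \<xi> powr a) \<partial>lborel)"
proof -
  have "(\<integral>\<^sup>+t. ennreal (a * t powr (a-1)) * indicator {0<..x} t * (\<integral>\<^sup>+\<xi>. G \<xi> * indicator {0<..t} \<xi> \<partial>lborel) \<partial>lborel) =
        (\<integral>\<^sup>+\<xi>. G \<xi> * indicator {0<..} \<xi> * (\<integral>\<^sup>+t. (ennreal (a * t powr (a-1)) * indicator {0<..x} t) * indicator {\<xi>..} t \<partial>lborel) \<partial>lborel)"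
    by (rule swap_tri) auto
  also have "\<dots> = (\<integral>\<^sup>+\<xi>. G \<xi> * indicator {0<..x} \<xi> * ennreal (x powr a - \<xi> powr a) \<partial>lborel)"
  proof (intro nn_integral_cong)
    fix \<xi> :: real
    show "G \<xi> * indicator {0<..} \<xi> * (\<integral>\<^sup>+t. (ennreal (a * t powr (a-1)) * indicator {0<..x} t) * indicator {\<xi>..} t \<partial>lborel) =
          G \<xi> * indicator {0<..x} \<xi> * ennreal (x powr a - \<xi> powr a)"
    proof (cases "\<xi> > 0 \<and> \<xi> \<le> x")
      case True
      have "(\<integral>\<^sup>+t. (ennreal (a * t powr (a-1)) * indicator {0<..x} t) * indicator {\<xi>..} t \<partial>lborel) =
            (\<integral>\<^sup>+t. ennreal (a * t powr (a-1)) * indicator {\<xi>..x} t \<partial>lborel)"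
        using True by (intro nn_integral_cong) (auto simp: indicator_def)
      then show ?thesis using nn_powr_int[of \<xi> x a] True a by simp
    next
      case False
      show ?thesis
      proof (cases "\<xi> > 0")
        case True
        with False have "x < \<xi>" by auto
        then have "(\<integral>\<^sup>+t. (ennreal (a * t powr (a-1)) * indicator {0<..x} t) * indicator {\<xi>..} t \<partial>lborel) = 0"
          by (subst nn_integral_0_iff_AE) (auto simp: indicator_def)
        then show ?thesis using False by simp
      qed simp
    qed
  qed
  finally show ?thesis .
qed



lemma subst_unit:
  fixes f :: "real \<Rightarrow> ennreal"
  assumes [measurable]: "f \<in> borel_measurable borel" and lam: "lam > 0"
  shows "(\<integral>\<^sup>+z. f z * indicator {0<..1} z \<partial>lborel) =
         (\<integral>\<^sup>+s. f (lam / (s + lam)) * ennreal (lam / (s + lam)^2) * indicator {0..} s \<partial>lborel)"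
proof -
  define g where "g t = lam / (lam - t)" for t :: real
  define g' where "g' t = lam / (lam - t)^2" for t :: real
  have g0: "g 0 = 1" using lam by (simp add: g_def)
  have gn: "g (- real n) = lam / (lam + real n)" for n by (simp add: g_def)
  have eqn: "(\<integral>\<^sup>+z. f z * indicator {g (-real (Suc n))..g 0} z \<partial>lborel) =
             (\<integral>\<^sup>+t. f (g t) * g' t * indicator {-real (Suc n)..0} t \<partial>lborel)" for n
  proof (rule nn_integral_substitution_aux)
    show "(g has_real_derivative g' x) (at x)" if "x \<in> {-real (Suc n)..0}" for x
    proof -
      have "lam - x \<noteq> 0" using that lam by auto
      then show ?thesis unfolding g_def g'_def
        by (auto intro!: derivative_eq_intros simp: power2_eq_square field_simps)
    qed
    show "continuous_on {-real (Suc n)..0} g'" unfolding g'_def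
      using lam by (intro continuous_intros) auto
    show "g' x \<ge> 0" for x using lam by (simp add: g'_def)
  qed (use lam in auto)
  have L: "(\<lambda>n. \<integral>\<^sup>+z. f z * indicator {g (-real (Suc n))..g 0} z \<partial>lborel) \<longlonglongrightarrow> (\<integral>\<^sup>+z. f z * indicator {0<..1} z \<partial>lborel)"
  proof (rule nn_integral_LIMSEQ)
    show "incseq (\<lambda>n z. f z * indicator {g (-real (Suc n))..g 0} z)"
    proof (intro incseq_SucI le_funI)
      fix n z
      have "lam / (lam + real (Suc (Suc n))) \<le> lam / (lam + real (Suc n))"
        using lam by (intro divide_left_mono) auto
      then show "f z * indicator {g (-real (Suc n))..g 0} z \<le> f z * indicator {g (-real (Suc (Suc n)))..g 0} z"
        unfolding gn g0 by (intro mult_left_mono) (auto simp: indicator_def simp del: of_nat_Suc)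
    qed
    show "(\<lambda>n. f z * indicator {g (-real (Suc n))..g 0} z) \<longlonglongrightarrow> f z * indicator {0<..1} z" for z
    proof (cases "0 < z \<and> z \<le> 1")
      case True
      obtain N :: nat where N: "lam / z < N" using reals_Archimedean2 by blast
      have "eventually (\<lambda>n. f z * indicator {g (-real (Suc n))..g 0} z = f z * indicator {0<..1} z) sequentially"
        unfolding eventually_sequentially
      proof (intro exI allI impI)
        fix n assume "N \<le> n"
        then have "lam / z < lam + real (Suc n)" using N lam by linarith
        then have "lam < (lam + real (Suc n)) * z" using True by (simp add: divide_less_eq)
        then have "lam / (lam + real (Suc n)) \<le> z" using lam by (simp add: divide_le_eq mult.commute)
        then show "f z * indicator {g (-real (Suc n))..g 0} z = f z * indicator {0<..1} z"
          unfolding gn g0 using True by (simp add: indicator_def)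
      qed
      then show ?thesis by (rule tendsto_eventually)
    next
      case False
      have "f z * indicator {g (-real (Suc n))..g 0} z = f z * indicator {0<..1} z" for n
      proof -
        have "0 < lam / (lam + real (Suc n))" using lam by simp
        then show ?thesis unfolding gn g0 using False by (auto simp: indicator_def)
      qed
      then show ?thesis by simp
    qed
  qed measurable
  have R: "(\<lambda>n. \<integral>\<^sup>+t. f (g t) * g' t * indicator {-real (Suc n)..0} t \<partial>lborel) \<longlonglongrightarrow> (\<integral>\<^sup>+t. f (g t) * g' t * indicator {..0} t \<partial>lborel)"
  proof (rule nn_integral_LIMSEQ)
    show "incseq (\<lambda>n t. f (g t) * ennreal (g' t) * indicator {-real (Suc n)..0} t)"
      by (intro incseq_SucI le_funI mult_left_mono) (auto simp: indicator_def)
    show "(\<lambda>n. f (g t) * ennreal (g' t) * indicator {-real (Suc n)..0} t) \<longlonglongrightarrow> f (g t) * ennreal (g' t) * indicator {..0} t" for t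
    proof -
      obtain N :: nat where N: "- t < N" using reals_Archimedean2 by blast
      have "eventually (\<lambda>n. f (g t) * ennreal (g' t) * indicator {-real (Suc n)..0} t = f (g t) * ennreal (g' t) * indicator {..0} t) sequentially"
        unfolding eventually_sequentially
        by (rule exI[of _ N]) (use N in \<open>auto simp: indicator_def\<close>)
      then show ?thesis by (rule tendsto_eventually)
    qed
    show "(\<lambda>t. f (g t) * ennreal (g' t) * indicator {-real (Suc n)..0} t) \<in> borel_measurable lborel" for n
      unfolding g_def g'_def by measurable
  qed
  have "(\<integral>\<^sup>+z. f z * indicator {0<..1} z \<partial>lborel) = (\<integral>\<^sup>+t. f (g t) * g' t * indicator {..0} t \<partial>lborel)"
  proof -
    have R': "(\<lambda>n. \<integral>\<^sup>+z. f z * indicator {g (-real (Suc n))..g 0} z \<partial>lborel) \<longlonglongrightarrow> (\<integral>\<^sup>+t. f (g t) * g' t * indicator {..0} t \<partial>lborel)"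
      unfolding eqn by (rule R)
    show ?thesis using LIMSEQ_unique[OF L R'] .
  qed
  also have "\<dots> = (\<integral>\<^sup>+s. f (g (0 + (-1) * s)) * g' (0 + (-1) * s) * indicator {..0} (0 + (-1) * s) \<partial>lborel)"
    by (subst nn_integral_real_affine[of _ "-1" 0]) (auto simp: g_def g'_def)
  also have "\<dots> = (\<integral>\<^sup>+s. f (lam / (s + lam)) * ennreal (lam / (s + lam)^2) * indicator {0..} s \<partial>lborel)"
    by (intro nn_integral_cong) (auto simp: g_def g'_def indicator_def add.commute)
  finally show ?thesis .
qed



lemma dens_zero_nonpos:
  fixes X :: "'a \<Rightarrow> real" and f :: "real \<Rightarrow> real"
  assumes P: "prob_space M" and f0: "\<And>x. f x \<ge> 0"
    and d: "distributed M lborel X (\<lambda>x. ennreal (f x))" and pos: "AE \<omega> in M. X \<omega> > 0"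
  shows "AE x in lborel. x \<le> 0 \<longrightarrow> f x = 0"
proof -
  have [measurable]: "X \<in> measurable M lborel" "(\<lambda>x. ennreal (f x)) \<in> borel_measurable lborel"
    using d by (auto simp: distributed_def)
  have "emeasure M (X -` {..0} \<inter> space M) = (\<integral>\<^sup>+x. ennreal (f x) * indicator {..0} x \<partial>lborel)"
    by (rule distributed_emeasure[OF d]) (simp add: atMost_borel)
  moreover have "emeasure M (X -` {..0} \<inter> space M) = 0"
  proof -
    have "X -` {..0} \<inter> space M = {\<omega> \<in> space M. \<not> X \<omega> > 0}" by auto
    moreover have "{\<omega> \<in> space M. \<not> X \<omega> > 0} \<in> sets M" by measurable
    ultimately show ?thesis
      using AE_iff_measurable[of "{\<omega> \<in> space M. \<not> X \<omega> > 0}" M "\<lambda>\<omega>. X \<omega> > 0"] pos by simp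
  qed
  ultimately have "(\<integral>\<^sup>+x. ennreal (f x) * indicator {..0} x \<partial>lborel) = 0" by simp
  then have "AE x in lborel. ennreal (f x) * indicator {..0} x = 0"
    by (subst (asm) nn_integral_0_iff_AE) auto
  then show ?thesis
    by eventually_elim (use f0 in \<open>auto simp: indicator_def\<close>)
qed

lemma density_T:
  fixes X Y :: "'a \<Rightarrow> real" and fX fY :: "real \<Rightarrow> real"
  assumes P: "prob_space M" and fX0: "\<And>x. fX x \<ge> 0" and fY0: "\<And>x. fY x \<ge> 0"
    and dX: "distributed M lborel X (\<lambda>x. ennreal (fX x))" and dY: "distributed M lborel Y (\<lambda>x. ennreal (fY x))"
    and pX: "AE \<omega> in M. X \<omega> > 0" and pY: "AE \<omega> in M. Y \<omega> > 0"
    and ind: "prob_space.indep_var M borel X borel Y" and lam: "lam > 0"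
  shows "distr M lborel (\<lambda>\<omega>. lam * Y \<omega> / X \<omega>) =
    density lborel (\<lambda>s. (\<integral>\<^sup>+x. ennreal (fX x) * ennreal (fY (s*x/lam)) * ennreal (x/lam) * indicator {0<..} x \<partial>lborel) * indicator {0<..} s)"
proof -
  interpret prob_space M by (rule P)
  have [measurable]: "X \<in> measurable M borel" "Y \<in> measurable M borel"
    "fX \<in> borel_measurable borel" "fY \<in> borel_measurable borel"
    using dX dY fX0 fY0 by (auto simp: distributed_def)
  have ind': "indep_var lborel X lborel Y" using ind by (simp add: indep_var_eq)
  have joint: "distributed M (lborel \<Otimes>\<^sub>M lborel) (\<lambda>\<omega>. (X \<omega>, Y \<omega>)) (\<lambda>(x, y). ennreal (fX x) * ennreal (fY y))"
    by (rule distributed_joint_indep[OF sigma_finite_lborel sigma_finite_lborel dX dY ind'])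
  have fXz: "AE x in lborel. x \<le> 0 \<longrightarrow> fX x = 0" by (rule dens_zero_nonpos[OF P fX0 dX pX])
  have fYz: "AE x in lborel. x \<le> 0 \<longrightarrow> fY x = 0" by (rule dens_zero_nonpos[OF P fY0 dY pY])
  show ?thesis
  proof (rule measure_eqI)
    fix A assume "A \<in> sets (distr M lborel (\<lambda>\<omega>. lam * Y \<omega> / X \<omega>))"
    then have [measurable]: "A \<in> sets borel" by simp
    have "emeasure (distr M lborel (\<lambda>\<omega>. lam * Y \<omega> / X \<omega>)) A = emeasure M ((\<lambda>\<omega>. lam * Y \<omega> / X \<omega>) -` A \<inter> space M)"
      by (rule emeasure_distr) auto
    also have "\<dots> = (\<integral>\<^sup>+\<omega>. indicator ((\<lambda>\<omega>. lam * Y \<omega> / X \<omega>) -` A \<inter> space M) \<omega> \<partial>M)"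
      by (rule nn_integral_indicator[symmetric]) measurable
    also have "\<dots> = (\<integral>\<^sup>+\<omega>. indicator A (lam * Y \<omega> / X \<omega>) \<partial>M)"
      by (intro nn_integral_cong) (auto simp: indicator_def)
    also have "\<dots> = (\<integral>\<^sup>+p. (case p of (x, y) \<Rightarrow> ennreal (fX x) * ennreal (fY y)) * indicator A (lam * snd p / fst p) \<partial>(lborel \<Otimes>\<^sub>M lborel))"
      by (subst distributed_nn_integral[OF joint]) auto
    also have "\<dots> = (\<integral>\<^sup>+x. \<integral>\<^sup>+y. ennreal (fX x) * ennreal (fY y) * indicator A (lam * y / x) \<partial>lborel \<partial>lborel)"
      by (subst lborel.nn_integral_fst[symmetric]) auto
    also have "\<dots> = (\<integral>\<^sup>+x. ennreal (fX x) * indicator {0<..} x * (ennreal (x/lam) *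
                       (\<integral>\<^sup>+s. ennreal (fY (s*x/lam)) * indicator {0<..} s * indicator A s \<partial>lborel)) \<partial>lborel)"
    proof (rule nn_integral_cong_AE)
      show "AE x in lborel. (\<integral>\<^sup>+y. ennreal (fX x) * ennreal (fY y) * indicator A (lam * y / x) \<partial>lborel) =
              ennreal (fX x) * indicator {0<..} x * (ennreal (x/lam) * (\<integral>\<^sup>+s. ennreal (fY (s*x/lam)) * indicator {0<..} s * indicator A s \<partial>lborel))"
        using fXz
      proof eventually_elim
        fix x assume hx: "x \<le> 0 \<longrightarrow> fX x = 0"
        show "(\<integral>\<^sup>+y. ennreal (fX x) * ennreal (fY y) * indicator A (lam * y / x) \<partial>lborel) =
              ennreal (fX x) * indicator {0<..} x * (ennreal (x/lam) * (\<integral>\<^sup>+s. ennreal (fY (s*x/lam)) * indicator {0<..} s * indicator A s \<partial>lborel))"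
        proof (cases "x > 0")
          case False then show ?thesis using hx by simp
        next
          case True
          have "(\<integral>\<^sup>+y. ennreal (fX x) * ennreal (fY y) * indicator A (lam * y / x) \<partial>lborel) =
                ennreal (fX x) * (\<integral>\<^sup>+y. ennreal (fY y) * indicator A (lam * y / x) \<partial>lborel)"
            by (subst nn_integral_cmult[symmetric]) (auto simp: mult.assoc)
          also have "(\<integral>\<^sup>+y. ennreal (fY y) * indicator A (lam * y / x) \<partial>lborel) =
                     (\<integral>\<^sup>+y. ennreal (fY y) * indicator {0<..} y * indicator A (lam * y / x) \<partial>lborel)"
            by (intro nn_integral_cong_AE, use fYz in eventually_elim) (auto simp: indicator_def)
          also have "\<dots> = ennreal \<bar>x/lam\<bar> * (\<integral>\<^sup>+s. ennreal (fY (0 + x/lam * s)) * indicator {0<..} (0 + x/lam * s) * indicator A (lam * (0 + x/lam * s) / x) \<partial>lborel)"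
            using True lam by (intro nn_integral_real_affine) auto
          also have "\<dots> = ennreal (x/lam) * (\<integral>\<^sup>+s. ennreal (fY (s*x/lam)) * indicator {0<..} s * indicator A s \<partial>lborel)"
          proof -
            have e: "ennreal (fY (0 + x/lam * s)) * indicator {0<..} (0 + x/lam * s) * indicator A (lam * (0 + x/lam * s) / x)
                   = ennreal (fY (s*x/lam)) * indicator {0<..} s * indicator A s" for s
            proof -
              have "0 < s * x / lam \<longleftrightarrow> 0 < s" using True lam by (simp add: zero_less_divide_iff zero_less_mult_iff)
              moreover have h1: "0 + x/lam * s = s * x / lam" "lam * (0 + x/lam * s) / x = s" using True lam by auto
              ultimately show ?thesis unfolding h1 by (simp add: indicator_def)
            qed
            show ?thesis using True lam by (simp only: e) simp
          qed
          finally show ?thesis using True by simp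
        qed
      qed
    qed
    also have "\<dots> = (\<integral>\<^sup>+x. \<integral>\<^sup>+s. ennreal (fX x) * ennreal (fY (s*x/lam)) * ennreal (x/lam) * indicator {0<..} x * indicator {0<..} s * indicator A s \<partial>lborel \<partial>lborel)"
    proof (intro nn_integral_cong)
      fix x :: real
      have "(\<integral>\<^sup>+s. ennreal (fX x) * ennreal (fY (s*x/lam)) * ennreal (x/lam) * indicator {0<..} x * indicator {0<..} s * indicator A s \<partial>lborel)
          = (\<integral>\<^sup>+s. (ennreal (fX x) * indicator {0<..} x * ennreal (x/lam)) * (ennreal (fY (s*x/lam)) * indicator {0<..} s * indicator A s) \<partial>lborel)"
        by (intro nn_integral_cong) (simp add: mult_ac)
      also have "\<dots> = (ennreal (fX x) * indicator {0<..} x * ennreal (x/lam)) * (\<integral>\<^sup>+s. ennreal (fY (s*x/lam)) * indicator {0<..} s * indicator A s \<partial>lborel)"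
        by (rule nn_integral_cmult) measurable
      finally show "ennreal (fX x) * indicator {0<..} x * (ennreal (x/lam) * (\<integral>\<^sup>+s. ennreal (fY (s*x/lam)) * indicator {0<..} s * indicator A s \<partial>lborel))
          = (\<integral>\<^sup>+s. ennreal (fX x) * ennreal (fY (s*x/lam)) * ennreal (x/lam) * indicator {0<..} x * indicator {0<..} s * indicator A s \<partial>lborel)"
        by (simp add: mult_ac)
    qed
    also have "\<dots> = (\<integral>\<^sup>+s. \<integral>\<^sup>+x. ennreal (fX x) * ennreal (fY (s*x/lam)) * ennreal (x/lam) * indicator {0<..} x * indicator {0<..} s * indicator A s \<partial>lborel \<partial>lborel)"
      by (subst lborel_pair.Fubini') (auto simp: case_prod_unfold)
    also have "\<dots> = (\<integral>\<^sup>+s. ((\<integral>\<^sup>+x. ennreal (fX x) * ennreal (fY (s*x/lam)) * ennreal (x/lam) * indicator {0<..} x \<partial>lborel) * indicator {0<..} s) * indicator A s \<partial>lborel)"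
    proof (intro nn_integral_cong)
      fix s :: real
      have "(\<integral>\<^sup>+x. ennreal (fX x) * ennreal (fY (s*x/lam)) * ennreal (x/lam) * indicator {0<..} x * indicator {0<..} s * indicator A s \<partial>lborel)
          = (\<integral>\<^sup>+x. (ennreal (fX x) * ennreal (fY (s*x/lam)) * ennreal (x/lam) * indicator {0<..} x) * (indicator {0<..} s * indicator A s) \<partial>lborel)"
        by (intro nn_integral_cong) (simp add: mult_ac)
      also have "\<dots> = (\<integral>\<^sup>+x. ennreal (fX x) * ennreal (fY (s*x/lam)) * ennreal (x/lam) * indicator {0<..} x \<partial>lborel) * (indicator {0<..} s * indicator A s)"
        by (rule nn_integral_multc) measurable
      finally show "(\<integral>\<^sup>+x. ennreal (fX x) * ennreal (fY (s*x/lam)) * ennreal (x/lam) * indicator {0<..} x * indicator {0<..} s * indicator A s \<partial>lborel)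
          = ((\<integral>\<^sup>+x. ennreal (fX x) * ennreal (fY (s*x/lam)) * ennreal (x/lam) * indicator {0<..} x \<partial>lborel) * indicator {0<..} s) * indicator A s"
        by (simp add: mult_ac)
    qed
    also have "\<dots> = emeasure (density lborel (\<lambda>s. (\<integral>\<^sup>+x. ennreal (fX x) * ennreal (fY (s*x/lam)) * ennreal (x/lam) * indicator {0<..} x \<partial>lborel) * indicator {0<..} s)) A"
      by (subst emeasure_density) auto
    finally show "emeasure (distr M lborel (\<lambda>\<omega>. lam * Y \<omega> / X \<omega>)) A = emeasure (density lborel (\<lambda>s. (\<integral>\<^sup>+x. ennreal (fX x) * ennreal (fY (s*x/lam)) * ennreal (x/lam) * indicator {0<..} x \<partial>lborel) * indicator {0<..} s)) A" .
  qed simp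
qed



lemma psi_eq:
  fixes a b lam :: real
  assumes "a > 0" "b > 0"
  shows "lam * (1 - a / (a + b)) / (a / (a + b)) = lam * b / a"
proof -
  have "1 - a / (a + b) = b / (a + b)" using assms by (simp add: field_simps)
  then have "lam * (1 - a / (a + b)) / (a / (a + b)) = lam * (b / (a + b)) / (a / (a + b))" by simp
  also have "\<dots> = lam * (b / (a + b)) * (a + b) / a" by (simp add: divide_divide_eq_right)
  also have "lam * (b / (a + b)) * (a + b) = lam * b" using assms by simp
  finally show ?thesis .
qed

lemma density_TZ:
  fixes X Y Z :: "'a \<Rightarrow> real" and fZ :: "real \<Rightarrow> real"
  assumes P: "prob_space M" and fZ0: "\<And>x. fZ x \<ge> 0"
    and dZ: "distributed M lborel Z (\<lambda>x. ennreal (fZ x))"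
    and [measurable]: "X \<in> borel_measurable M" "Y \<in> borel_measurable M"
    and pX: "AE \<omega> in M. X \<omega> > 0" and pY: "AE \<omega> in M. Y \<omega> > 0"
    and eq: "distr M borel Z = distr M borel (\<lambda>\<omega>. X \<omega> / (X \<omega> + Y \<omega>))" and lam: "lam > 0"
  shows "distr M lborel (\<lambda>\<omega>. lam * Y \<omega> / X \<omega>) =
    density lborel (\<lambda>s. ennreal (fZ (lam / (s + lam))) * ennreal (lam / (s + lam)^2) * indicator {0<..} s)"
proof -
  interpret prob_space M by (rule P)
  have [measurable]: "Z \<in> borel_measurable M" "fZ \<in> borel_measurable borel"
    using dZ fZ0 by (auto simp: distributed_def)
  define \<psi> where "\<psi> z = lam * (1 - z) / z" for z :: real
  have [measurable]: "\<psi> \<in> borel_measurable borel" unfolding \<psi>_def by measurable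
  show ?thesis
  proof (rule measure_eqI)
    fix A assume "A \<in> sets (distr M lborel (\<lambda>\<omega>. lam * Y \<omega> / X \<omega>))"
    then have [measurable]: "A \<in> sets borel" by simp
    have "emeasure (distr M lborel (\<lambda>\<omega>. lam * Y \<omega> / X \<omega>)) A = emeasure M ((\<lambda>\<omega>. lam * Y \<omega> / X \<omega>) -` A \<inter> space M)"
      by (rule emeasure_distr) auto
    also have "\<dots> = (\<integral>\<^sup>+\<omega>. indicator ((\<lambda>\<omega>. lam * Y \<omega> / X \<omega>) -` A \<inter> space M) \<omega> \<partial>M)"
      by (rule nn_integral_indicator[symmetric]) measurable
    also have "\<dots> = (\<integral>\<^sup>+\<omega>. indicator (A \<inter> {0<..}) (\<psi> (X \<omega> / (X \<omega> + Y \<omega>))) \<partial>M)"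
    proof (rule nn_integral_cong_AE)
      show "AE \<omega> in M. indicator ((\<lambda>\<omega>. lam * Y \<omega> / X \<omega>) -` A \<inter> space M) \<omega> = indicator (A \<inter> {0<..}) (\<psi> (X \<omega> / (X \<omega> + Y \<omega>)))"
        using pX pY AE_space
      proof eventually_elim
        case (elim \<omega>)
        have "\<psi> (X \<omega> / (X \<omega> + Y \<omega>)) = lam * Y \<omega> / X \<omega>"
          using elim lam unfolding \<psi>_def by (intro psi_eq) auto
        moreover have "lam * Y \<omega> / X \<omega> > 0" using elim lam by simp
        ultimately show ?case using elim by (auto simp: indicator_def)
      qed
    qed
    also have "\<dots> = (\<integral>\<^sup>+z. indicator (A \<inter> {0<..}) (\<psi> z) \<partial>distr M borel (\<lambda>\<omega>. X \<omega> / (X \<omega> + Y \<omega>)))"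
      by (subst nn_integral_distr) auto
    also have "\<dots> = (\<integral>\<^sup>+z. indicator (A \<inter> {0<..}) (\<psi> z) \<partial>distr M borel Z)"
      unfolding eq ..
    also have "\<dots> = (\<integral>\<^sup>+\<omega>. indicator (A \<inter> {0<..}) (\<psi> (Z \<omega>)) \<partial>M)"
      by (subst nn_integral_distr) auto
    also have "\<dots> = (\<integral>\<^sup>+z. ennreal (fZ z) * indicator (A \<inter> {0<..}) (\<psi> z) \<partial>lborel)"
      by (subst distributed_nn_integral[OF dZ]) auto
    also have "\<dots> = (\<integral>\<^sup>+z. (ennreal (fZ z) * indicator (A \<inter> {0<..}) (\<psi> z)) * indicator {0<..1} z \<partial>lborel)"
    proof (intro nn_integral_cong)
      fix z :: real
      have "z \<in> {0<..1}" if "\<psi> z > 0"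
      proof (rule ccontr)
        assume "z \<notin> {0<..1}"
        then have "z \<le> 0 \<or> z > 1" by auto
        then have "\<psi> z \<le> 0"
        proof
          assume z: "z \<le> 0"
          show ?thesis
          proof (cases "z = 0")
            case False
            then have "z < 0" using z by simp
            moreover have "lam * (1 - z) \<ge> 0" using z lam by simp
            ultimately show ?thesis unfolding \<psi>_def by (simp add: divide_nonneg_neg)
          qed (simp add: \<psi>_def)
        next
          assume z: "z > 1"
          then have "lam * (1 - z) \<le> 0" using lam by (simp add: mult_nonneg_nonpos)
          then show ?thesis unfolding \<psi>_def using z by (simp add: divide_nonpos_pos)
        qed
        then show False using that by simp
      qed
      then show "ennreal (fZ z) * indicator (A \<inter> {0<..}) (\<psi> z) = ennreal (fZ z) * indicator (A \<inter> {0<..}) (\<psi> z) * indicator {0<..1} z"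
        by (auto simp: indicator_def)
    qed
    also have "\<dots> = (\<integral>\<^sup>+s. (ennreal (fZ (lam / (s + lam))) * indicator (A \<inter> {0<..}) (\<psi> (lam / (s + lam)))) * ennreal (lam / (s + lam)^2) * indicator {0..} s \<partial>lborel)"
      by (rule subst_unit[OF _ lam]) measurable
    also have "\<dots> = (\<integral>\<^sup>+s. (ennreal (fZ (lam / (s + lam))) * ennreal (lam / (s + lam)^2) * indicator {0<..} s) * indicator A s \<partial>lborel)"
    proof (intro nn_integral_cong)
      fix s :: real
      show "ennreal (fZ (lam / (s + lam))) * indicator (A \<inter> {0<..}) (\<psi> (lam / (s + lam))) * ennreal (lam / (s + lam)^2) * indicator {0..} s =
            ennreal (fZ (lam / (s + lam))) * ennreal (lam / (s + lam)^2) * indicator {0<..} s * indicator A s"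
      proof (cases "s \<ge> 0")
        case True
        have "\<psi> (lam / (s + lam)) = s"
        proof (cases "s = 0")
          case True then show ?thesis using lam by (simp add: \<psi>_def)
        next
          case False
          then have "s > 0" using \<open>s \<ge> 0\<close> by simp
          then show ?thesis using psi_eq[of lam s lam] lam by (simp add: \<psi>_def add.commute)
        qed
        then show ?thesis using True by (auto simp: indicator_def)
      qed simp
    qed
    also have "\<dots> = emeasure (density lborel (\<lambda>s. ennreal (fZ (lam / (s + lam))) * ennreal (lam / (s + lam)^2) * indicator {0<..} s)) A"
      by (subst emeasure_density) auto
    finally show "emeasure (distr M lborel (\<lambda>\<omega>. lam * Y \<omega> / X \<omega>)) A = emeasure (density lborel (\<lambda>s. ennreal (fZ (lam / (s + lam))) * ennreal (lam / (s + lam)^2) * indicator {0<..} s)) A" .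
  qed simp
qed



lemma nn_fin_integrable:
  fixes f :: "real \<Rightarrow> real"
  assumes [measurable]: "f \<in> borel_measurable borel" and f0: "\<And>x. f x \<ge> 0"
    and fin: "(\<integral>\<^sup>+x. ennreal (f x) \<partial>lborel) < \<infinity>"
  shows "integrable lborel f" "(\<integral>\<^sup>+x. ennreal (f x) \<partial>lborel) = ennreal (\<integral>x. f x \<partial>lborel)"
proof -
  show i: "integrable lborel f"
    by (rule integrableI_bounded) (use fin f0 in auto)
  show "(\<integral>\<^sup>+x. ennreal (f x) \<partial>lborel) = ennreal (\<integral>x. f x \<partial>lborel)"
    by (rule nn_integral_eq_integral[OF i]) (use f0 in auto)
qed

lemma cum_meas[measurable]:
  fixes G :: "real \<Rightarrow> real"
  assumes [measurable]: "G \<in> borel_measurable borel"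
  shows "(\<lambda>t. \<integral>\<^sup>+\<xi>. ennreal (G \<xi> * indicator {0<..t} \<xi>) \<partial>lborel) \<in> borel_measurable borel"
proof -
  have "(\<lambda>t. \<integral>\<^sup>+\<xi>. ennreal (G \<xi> * (if 0 < \<xi> \<and> \<xi> \<le> t then 1 else 0)) \<partial>lborel) \<in> borel_measurable borel"
    by measurable
  moreover have "(\<lambda>t. \<integral>\<^sup>+\<xi>. ennreal (G \<xi> * indicator {0<..t} \<xi>) \<partial>lborel) = (\<lambda>t. \<integral>\<^sup>+\<xi>. ennreal (G \<xi> * (if 0 < \<xi> \<and> \<xi> \<le> t then 1 else 0)) \<partial>lborel)"
    by (intro ext nn_integral_cong) (simp add: indicator_def)
  ultimately show ?thesis by simp
qed

lemma cum_fin: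
  fixes G :: "real \<Rightarrow> real"
  assumes [measurable]: "G \<in> borel_measurable borel" and G0: "\<And>x. G x \<ge> 0" and s: "s > 0"
    and fin: "(\<integral>\<^sup>+\<xi>. ennreal (G \<xi> * exp (-s*\<xi>) * indicator {0<..} \<xi>) \<partial>lborel) < \<infinity>"
  shows "(\<integral>\<^sup>+\<xi>. ennreal (G \<xi> * indicator {0<..t} \<xi>) \<partial>lborel) < \<infinity>"
proof -
  have "(\<integral>\<^sup>+\<xi>. ennreal (G \<xi> * indicator {0<..t} \<xi>) \<partial>lborel) \<le>
        (\<integral>\<^sup>+\<xi>. ennreal (exp (s*t)) * ennreal (G \<xi> * exp (-s*\<xi>) * indicator {0<..} \<xi>) \<partial>lborel)"
  proof (intro nn_integral_mono)
    fix \<xi> :: real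
    show "ennreal (G \<xi> * indicator {0<..t} \<xi>) \<le> ennreal (exp (s*t)) * ennreal (G \<xi> * exp (-s*\<xi>) * indicator {0<..} \<xi>)"
    proof (cases "0 < \<xi> \<and> \<xi> \<le> t")
      case True
      have "1 \<le> exp (s*t) * exp (-s*\<xi>)"
        using True s by (simp add: mult_exp_exp[simplified] mult_left_mono)
      then have "G \<xi> * 1 \<le> G \<xi> * (exp (s*t) * exp (-s*\<xi>))" using G0 by (intro mult_left_mono) auto
      then show ?thesis using True G0 by (simp add: ennreal_mult'[symmetric] mult_ac)
    qed (auto simp: indicator_def)
  qed
  also have "\<dots> = ennreal (exp (s*t)) * (\<integral>\<^sup>+\<xi>. ennreal (G \<xi> * exp (-s*\<xi>) * indicator {0<..} \<xi>) \<partial>lborel)"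
    by (rule nn_integral_cmult) measurable
  also have "\<dots> < \<infinity>" using fin by (simp add: ennreal_mult_less_top)
  finally show ?thesis .
qed

lemma lap_cum:
  fixes G :: "real \<Rightarrow> real"
  assumes [measurable]: "G \<in> borel_measurable borel" and G0: "\<And>x. G x \<ge> 0" and s: "s > 0"
    and fin: "(\<integral>\<^sup>+\<xi>. ennreal (G \<xi> * exp (-s*\<xi>) * indicator {0<..} \<xi>) \<partial>lborel) < \<infinity>"
  shows "integrable lborel (\<lambda>\<xi>. G \<xi> * exp (-s*\<xi>) * indicator {0<..} \<xi>)"
    "integrable lborel (\<lambda>t. exp (-s*t) * enn2real (\<integral>\<^sup>+\<xi>. ennreal (G \<xi> * indicator {0<..t} \<xi>) \<partial>lborel) * indicator {0<..} t)"
    "(\<integral>t. exp (-s*t) * enn2real (\<integral>\<^sup>+\<xi>. ennreal (G \<xi> * indicator {0<..t} \<xi>) \<partial>lborel) * indicator {0<..} t \<partial>lborel)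
       = (\<integral>\<xi>. G \<xi> * exp (-s*\<xi>) * indicator {0<..} \<xi> \<partial>lborel) / s"
proof -
  define Cum where "Cum t = (\<integral>\<^sup>+\<xi>. ennreal (G \<xi> * indicator {0<..t} \<xi>) \<partial>lborel)" for t
  have Cfin: "Cum t < \<infinity>" for t unfolding Cum_def by (rule cum_fin[OF _ G0 s fin]) simp
  have [measurable]: "Cum \<in> borel_measurable borel" unfolding Cum_def by measurable
  have gi: "integrable lborel (\<lambda>\<xi>. G \<xi> * exp (-s*\<xi>) * indicator {0<..} \<xi>)"
    and ge: "(\<integral>\<^sup>+\<xi>. ennreal (G \<xi> * exp (-s*\<xi>) * indicator {0<..} \<xi>) \<partial>lborel) = ennreal (\<integral>\<xi>. G \<xi> * exp (-s*\<xi>) * indicator {0<..} \<xi> \<partial>lborel)"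
    using nn_fin_integrable[of "\<lambda>\<xi>. G \<xi> * exp (-s*\<xi>) * indicator {0<..} \<xi>"] fin G0 by auto
  show "integrable lborel (\<lambda>\<xi>. G \<xi> * exp (-s*\<xi>) * indicator {0<..} \<xi>)" by (rule gi)
  have I0: "(\<integral>\<xi>. G \<xi> * exp (-s*\<xi>) * indicator {0<..} \<xi> \<partial>lborel) \<ge> 0"
    using G0 by (intro integral_nonneg_AE AE_I2) auto
  have "(\<integral>\<^sup>+t. ennreal (exp (-s*t) * enn2real (Cum t) * indicator {0<..} t) \<partial>lborel)
      = (\<integral>\<^sup>+t. ennreal (exp (-s*t)) * indicator {0<..} t * (\<integral>\<^sup>+\<xi>. ennreal (G \<xi>) * indicator {0<..t} \<xi> \<partial>lborel) \<partial>lborel)"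
  proof (intro nn_integral_cong)
    fix t :: real
    have "Cum t = (\<integral>\<^sup>+\<xi>. ennreal (G \<xi>) * indicator {0<..t} \<xi> \<partial>lborel)"
      unfolding Cum_def by (intro nn_integral_cong) (simp add: indicator_def)
    then show "ennreal (exp (-s*t) * enn2real (Cum t) * indicator {0<..} t) = ennreal (exp (-s*t)) * indicator {0<..} t * (\<integral>\<^sup>+\<xi>. ennreal (G \<xi>) * indicator {0<..t} \<xi> \<partial>lborel)"
      using Cfin[of t] by (simp add: ennreal_mult'' indicator_def ennreal_enn2real_if)
  qed
  also have "\<dots> = (\<integral>\<^sup>+\<xi>. ennreal (G \<xi>) * indicator {0<..} \<xi> * ennreal (exp (-s*\<xi>) / s) \<partial>lborel)"
    by (rule swap_exp[OF _ s]) measurable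
  also have "\<dots> = (\<integral>\<^sup>+\<xi>. ennreal (1/s) * ennreal (G \<xi> * exp (-s*\<xi>) * indicator {0<..} \<xi>) \<partial>lborel)"
    using s G0 by (intro nn_integral_cong) (simp add: ennreal_mult'' [symmetric] indicator_def mult_ac)
  also have "\<dots> = ennreal (1/s) * ennreal (\<integral>\<xi>. G \<xi> * exp (-s*\<xi>) * indicator {0<..} \<xi> \<partial>lborel)"
    unfolding ge[symmetric] by (rule nn_integral_cmult) measurable
  also have "\<dots> = ennreal ((\<integral>\<xi>. G \<xi> * exp (-s*\<xi>) * indicator {0<..} \<xi> \<partial>lborel) / s)"
    using s I0 by (simp add: ennreal_mult'' [symmetric])
  finally have eq: "(\<integral>\<^sup>+t. ennreal (exp (-s*t) * enn2real (Cum t) * indicator {0<..} t) \<partial>lborel) = ennreal ((\<integral>\<xi>. G \<xi> * exp (-s*\<xi>) * indicator {0<..} \<xi> \<partial>lborel) / s)" .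
  have nn: "exp (-s*t) * enn2real (Cum t) * indicator {0<..} t \<ge> 0" for t by simp
  have ci: "integrable lborel (\<lambda>t. exp (-s*t) * enn2real (Cum t) * indicator {0<..} t)"
    by (rule nn_fin_integrable(1)) (use eq nn in auto)
  then show "integrable lborel (\<lambda>t. exp (-s*t) * enn2real (\<integral>\<^sup>+\<xi>. ennreal (G \<xi> * indicator {0<..t} \<xi>) \<partial>lborel) * indicator {0<..} t)"
    unfolding Cum_def .
  have "ennreal (\<integral>t. exp (-s*t) * enn2real (Cum t) * indicator {0<..} t \<partial>lborel) = ennreal ((\<integral>\<xi>. G \<xi> * exp (-s*\<xi>) * indicator {0<..} \<xi> \<partial>lborel) / s)"
    using nn_fin_integrable(2)[of "\<lambda>t. exp (-s*t) * enn2real (Cum t) * indicator {0<..} t"] eq nn by auto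
  then show "(\<integral>t. exp (-s*t) * enn2real (\<integral>\<^sup>+\<xi>. ennreal (G \<xi> * indicator {0<..t} \<xi>) \<partial>lborel) * indicator {0<..} t \<partial>lborel)
       = (\<integral>\<xi>. G \<xi> * exp (-s*\<xi>) * indicator {0<..} \<xi> \<partial>lborel) / s"
    unfolding Cum_def using s I0
    by (subst (asm) ennreal_inj) (auto intro!: integral_nonneg_AE)
qed

lemma pow_cum:
  fixes G :: "real \<Rightarrow> real"
  assumes [measurable]: "G \<in> borel_measurable borel" and G0: "\<And>x. G x \<ge> 0" and a: "a \<ge> 0" and x: "x > 0"
    and fin: "(\<integral>\<^sup>+\<xi>. ennreal (G \<xi> * indicator {0<..x} \<xi>) \<partial>lborel) < \<infinity>"
  shows "integrable lborel (\<lambda>\<xi>. G \<xi> * \<xi> powr a * indicator {0<..x} \<xi>)"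
    "integrable lborel (\<lambda>t. a * t powr (a-1) * enn2real (\<integral>\<^sup>+\<xi>. ennreal (G \<xi> * indicator {0<..t} \<xi>) \<partial>lborel) * indicator {0<..x} t)"
    "(\<integral>\<xi>. G \<xi> * \<xi> powr a * indicator {0<..x} \<xi> \<partial>lborel) +
     (\<integral>t. a * t powr (a-1) * enn2real (\<integral>\<^sup>+\<xi>. ennreal (G \<xi> * indicator {0<..t} \<xi>) \<partial>lborel) * indicator {0<..x} t \<partial>lborel)
     = x powr a * enn2real (\<integral>\<^sup>+\<xi>. ennreal (G \<xi> * indicator {0<..x} \<xi>) \<partial>lborel)"
proof -
  define Cum where "Cum t = (\<integral>\<^sup>+\<xi>. ennreal (G \<xi> * indicator {0<..t} \<xi>) \<partial>lborel)" for t
  have [measurable]: "Cum \<in> borel_measurable borel" unfolding Cum_def by measurable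
  have Cmono: "Cum t \<le> Cum x" if "t \<le> x" for t
    unfolding Cum_def using that G0 by (intro nn_integral_mono) (auto simp: indicator_def)
  have Cfin: "Cum t < \<infinity>" if "t \<le> x" for t using Cmono[OF that] fin unfolding Cum_def[of x] by simp
  have Cx: "Cum x = ennreal (enn2real (Cum x))" using Cfin[of x] by (simp add: ennreal_enn2real_if)
  define f1 where "f1 \<xi> = G \<xi> * \<xi> powr a * indicator {0<..x} \<xi>" for \<xi>
  define f2 where "f2 t = a * t powr (a-1) * enn2real (Cum t) * indicator {0<..x} t" for t
  have [measurable]: "f1 \<in> borel_measurable borel" "f2 \<in> borel_measurable borel" unfolding f1_def f2_def by measurable
  have f10: "f1 \<xi> \<ge> 0" for \<xi> unfolding f1_def using G0 by simp
  have f20: "f2 t \<ge> 0" for t unfolding f2_def using a by simp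
  have "(\<integral>\<^sup>+t. ennreal (f2 t) \<partial>lborel) = (\<integral>\<^sup>+t. ennreal (a * t powr (a-1)) * indicator {0<..x} t * (\<integral>\<^sup>+\<xi>. ennreal (G \<xi>) * indicator {0<..t} \<xi> \<partial>lborel) \<partial>lborel)"
  proof (intro nn_integral_cong)
    fix t :: real
    have "Cum t = (\<integral>\<^sup>+\<xi>. ennreal (G \<xi>) * indicator {0<..t} \<xi> \<partial>lborel)"
      unfolding Cum_def by (intro nn_integral_cong) (simp add: indicator_def)
    then show "ennreal (f2 t) = ennreal (a * t powr (a-1)) * indicator {0<..x} t * (\<integral>\<^sup>+\<xi>. ennreal (G \<xi>) * indicator {0<..t} \<xi> \<partial>lborel)"
      unfolding f2_def using Cfin[of t] a by (auto simp: ennreal_mult'' indicator_def ennreal_enn2real_if)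
  qed
  also have "\<dots> = (\<integral>\<^sup>+\<xi>. ennreal (G \<xi>) * indicator {0<..x} \<xi> * ennreal (x powr a - \<xi> powr a) \<partial>lborel)"
    by (rule swap_pow[OF _ a]) measurable
  finally have e2: "(\<integral>\<^sup>+t. ennreal (f2 t) \<partial>lborel) = (\<integral>\<^sup>+\<xi>. ennreal (G \<xi>) * indicator {0<..x} \<xi> * ennreal (x powr a - \<xi> powr a) \<partial>lborel)" .
  have "(\<integral>\<^sup>+\<xi>. ennreal (f1 \<xi>) \<partial>lborel) + (\<integral>\<^sup>+t. ennreal (f2 t) \<partial>lborel)
      = (\<integral>\<^sup>+\<xi>. ennreal (f1 \<xi>) + ennreal (G \<xi>) * indicator {0<..x} \<xi> * ennreal (x powr a - \<xi> powr a) \<partial>lborel)"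
    unfolding e2 by (rule nn_integral_add[symmetric]) measurable
  also have "\<dots> = (\<integral>\<^sup>+\<xi>. ennreal (x powr a) * ennreal (G \<xi> * indicator {0<..x} \<xi>) \<partial>lborel)"
  proof (intro nn_integral_cong)
    fix \<xi> :: real
    show "ennreal (f1 \<xi>) + ennreal (G \<xi>) * indicator {0<..x} \<xi> * ennreal (x powr a - \<xi> powr a) = ennreal (x powr a) * ennreal (G \<xi> * indicator {0<..x} \<xi>)"
    proof (cases "0 < \<xi> \<and> \<xi> \<le> x")
      case True
      have "\<xi> powr a \<le> x powr a" using True a by (intro powr_mono2) auto
      then have "ennreal (G \<xi> * \<xi> powr a) + ennreal (G \<xi> * (x powr a - \<xi> powr a)) = ennreal (G \<xi> * \<xi> powr a + G \<xi> * (x powr a - \<xi> powr a))"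
        using G0[of \<xi>] by (intro ennreal_plus[symmetric]) auto
      also have "G \<xi> * \<xi> powr a + G \<xi> * (x powr a - \<xi> powr a) = x powr a * G \<xi>" by (simp add: algebra_simps)
      finally show ?thesis using True G0[of \<xi>] \<open>\<xi> powr a \<le> x powr a\<close>
        unfolding f1_def by (simp add: ennreal_mult'' [symmetric] indicator_def)
    next
      case False then show ?thesis by (auto simp: f1_def indicator_def)
    qed
  qed
  also have "\<dots> = ennreal (x powr a) * Cum x"
    unfolding Cum_def by (rule nn_integral_cmult) measurable
  also have "\<dots> = ennreal (x powr a * enn2real (Cum x))"
    by (subst Cx) (simp add: ennreal_mult'')
  finally have tot: "(\<integral>\<^sup>+\<xi>. ennreal (f1 \<xi>) \<partial>lborel) + (\<integral>\<^sup>+t. ennreal (f2 t) \<partial>lborel) = ennreal (x powr a * enn2real (Cum x))" .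
  then have fin1: "(\<integral>\<^sup>+\<xi>. ennreal (f1 \<xi>) \<partial>lborel) < \<infinity>" and fin2: "(\<integral>\<^sup>+t. ennreal (f2 t) \<partial>lborel) < \<infinity>"
  proof -
    have "(\<integral>\<^sup>+\<xi>. ennreal (f1 \<xi>) \<partial>lborel) + (\<integral>\<^sup>+t. ennreal (f2 t) \<partial>lborel) < \<infinity>" using tot by simp
    then show "(\<integral>\<^sup>+\<xi>. ennreal (f1 \<xi>) \<partial>lborel) < \<infinity>" "(\<integral>\<^sup>+t. ennreal (f2 t) \<partial>lborel) < \<infinity>"
      by (simp_all add: ennreal_add_less_top)
  qed
  have i1: "integrable lborel f1" and e1': "(\<integral>\<^sup>+\<xi>. ennreal (f1 \<xi>) \<partial>lborel) = ennreal (\<integral>\<xi>. f1 \<xi> \<partial>lborel)"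
    using nn_fin_integrable[OF _ f10 fin1] by auto
  have i2: "integrable lborel f2" and e2': "(\<integral>\<^sup>+t. ennreal (f2 t) \<partial>lborel) = ennreal (\<integral>t. f2 t \<partial>lborel)"
    using nn_fin_integrable[OF _ f20 fin2] by auto
  show "integrable lborel (\<lambda>\<xi>. G \<xi> * \<xi> powr a * indicator {0<..x} \<xi>)" using i1 unfolding f1_def .
  show "integrable lborel (\<lambda>t. a * t powr (a-1) * enn2real (\<integral>\<^sup>+\<xi>. ennreal (G \<xi> * indicator {0<..t} \<xi>) \<partial>lborel) * indicator {0<..x} t)"
    using i2 unfolding f2_def Cum_def .
  have p1: "(\<integral>\<xi>. f1 \<xi> \<partial>lborel) \<ge> 0" using f10 by (intro integral_nonneg_AE) auto
  have p2: "(\<integral>t. f2 t \<partial>lborel) \<ge> 0" using f20 by (intro integral_nonneg_AE) auto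
  have "ennreal ((\<integral>\<xi>. f1 \<xi> \<partial>lborel) + (\<integral>t. f2 t \<partial>lborel)) = ennreal (x powr a * enn2real (Cum x))"
    using tot unfolding e1' e2' using p1 p2 by (simp add: ennreal_plus)
  then have "(\<integral>\<xi>. f1 \<xi> \<partial>lborel) + (\<integral>t. f2 t \<partial>lborel) = x powr a * enn2real (Cum x)"
    using p1 p2 by (subst (asm) ennreal_inj) auto
  then show "(\<integral>\<xi>. G \<xi> * \<xi> powr a * indicator {0<..x} \<xi> \<partial>lborel) +
     (\<integral>t. a * t powr (a-1) * enn2real (\<integral>\<^sup>+\<xi>. ennreal (G \<xi> * indicator {0<..t} \<xi>) \<partial>lborel) * indicator {0<..x} t \<partial>lborel)
     = x powr a * enn2real (\<integral>\<^sup>+\<xi>. ennreal (G \<xi> * indicator {0<..x} \<xi>) \<partial>lborel)"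
    unfolding f1_def f2_def Cum_def .
qed



lemma ae_exists_below:
  assumes ae: "AE s in lborel. s > 0 \<longrightarrow> P s" and s: "(s::real) > 0"
  shows "\<exists>s0. 0 < s0 \<and> s0 < s \<and> P s0"
proof (rule ccontr)
  assume nex: "\<not> ?thesis"
  from ae obtain N where N: "{x \<in> space lborel. \<not> (x > 0 \<longrightarrow> P x)} \<subseteq> N" "emeasure lborel N = 0" "N \<in> sets lborel"
    by (auto elim!: AE_E)
  have "{0<..<s} \<subseteq> N" using N(1) nex by auto
  then have "emeasure lborel {0<..<s} \<le> emeasure lborel N" by (intro emeasure_mono N)
  then show False using N(2) s by simp
qed

theorem theorem2:
  fixes M :: "'a measure"
    and X Y Z :: "'a \<Rightarrow> real"
    and fX fY fZ :: "real \<Rightarrow> real"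
    and A B C :: "real \<Rightarrow> real"
    and p q lam :: real
    and g :: "real \<Rightarrow> real"
  assumes "prob_space M"
    and "\<And>x. fX x \<ge> 0" and "\<And>x. fY x \<ge> 0" and "\<And>x. fZ x \<ge> 0"
    and "distributed M lborel X (\<lambda>x. ennreal (fX x))"
    and "distributed M lborel Y (\<lambda>x. ennreal (fY x))"
    and "distributed M lborel Z (\<lambda>x. ennreal (fZ x))"
    and "AE \<omega> in M. X \<omega> > 0" and "AE \<omega> in M. Y \<omega> > 0" and "AE \<omega> in M. Z \<omega> > 0"
    and "prob_space.indep_var M borel X borel Y"
    and "distr M borel Z = distr M borel (\<lambda>\<omega>. X \<omega> / (X \<omega> + Y \<omega>))"
    and "\<And>x. x > 0 \<Longrightarrow> A x > 0" and "\<And>x. x > 0 \<Longrightarrow> B x > 0" and "\<And>x. x > 0 \<Longrightarrow> C x > 0"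
    and "\<And>s x. s > 0 \<Longrightarrow> x > 0 \<Longrightarrow> fY (s * x) = A s * B x * C (s * x)"
    and "q > 0" and "lam > 0" and "p \<ge> 0"
    and "\<And>x. x > 0 \<Longrightarrow> C x = (p + q * x) * exp (- lam * x)"
    and "((\<lambda>x. x powr (lam * p / q + 2) * B x * fX x) \<longlongrightarrow> 0) (at_right 0)"
    and "has_laplace g (\<lambda>s. 1 / (A (s / lam) * (s + lam)\<^sup>2) * fZ (lam / (s + lam)))"
  shows "AE x in lborel. x > 0 \<longrightarrow>
           fX x = lam ^ 3 / (q * x powr (lam * p / q + 2) * B x) *
                  (LINT \<xi>:{0<..x}|lborel. \<xi> powr (lam * p / q) * g \<xi>)"
proof -
  note P = assms(1) and fX0 = assms(2) and fY0 = assms(3) and fZ0 = assms(4)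
    and dX = assms(5) and dY = assms(6) and dZ = assms(7) and pX = assms(8) and pY = assms(9)
    and ind = assms(11) and eqZ = assms(12) and Apos = assms(13) and Bpos = assms(14) and Cpos = assms(15)
    and fYdec = assms(16) and q = assms(17) and lam = assms(18) and p = assms(19) and Cdef = assms(20)
    and lap = assms(22)
  interpret prob_space M by (rule P)
  have [measurable]: "X \<in> borel_measurable M" "Y \<in> borel_measurable M"
    "fX \<in> borel_measurable borel" "fY \<in> borel_measurable borel" "fZ \<in> borel_measurable borel"
    using dX dY dZ fX0 fY0 fZ0 by (auto simp: distributed_def)
  define a where "a = lam * p / q"
  define c where "c = lam ^ 3 / q"
  have a0: "a \<ge> 0" using p q lam by (simp add: a_def)
  define Cm where "Cm x = (p + q * x) * exp (- lam * x)" for x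
  define hp where "hp x = (if x > 0 then fY x / (A 1 * Cm x) * fX x else 0)" for x
  have [measurable]: "hp \<in> borel_measurable borel" unfolding hp_def Cm_def by measurable
  have hpB: "hp x = B x * fX x" if "x > 0" for x
  proof -
    have "fY x = A 1 * B x * C x" using fYdec[of 1 x] that by simp
    moreover have "C x = Cm x" using Cdef[OF that] by (simp add: Cm_def)
    moreover have "A 1 > 0" "C x > 0" using Apos[of 1] Cpos[OF that] by auto
    ultimately show ?thesis using that by (simp add: hp_def)
  qed
  have hp0: "hp x \<ge> 0" for x
    using hpB[of x] Bpos[of x] fX0[of x] by (cases "x > 0") (auto simp: hp_def)
  have xhp0: "x * hp x \<ge> 0" for x
  proof (cases "x > 0")
    case True then show ?thesis using hp0[of x] by simp
  next
    case False then show ?thesis by (simp add: hp_def)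
  qed
  define F where "F s = 1 / (A (s / lam) * (s + lam)\<^sup>2) * fZ (lam / (s + lam))" for s
  define Iq where "Iq s = (\<integral>\<^sup>+x. ennreal (x * hp x * (p + q * s * x / lam) * exp (- s * x)) \<partial>lborel)" for s
  have dT: "distr M lborel (\<lambda>\<omega>. lam * Y \<omega> / X \<omega>) =
    density lborel (\<lambda>s. (\<integral>\<^sup>+x. ennreal (fX x) * ennreal (fY (s*x/lam)) * ennreal (x/lam) * indicator {0<..} x \<partial>lborel) * indicator {0<..} s)"
    by (rule density_T[OF P fX0 fY0 dX dY pX pY ind lam])
  have dTZ: "distr M lborel (\<lambda>\<omega>. lam * Y \<omega> / X \<omega>) =
    density lborel (\<lambda>s. ennreal (fZ (lam / (s + lam))) * ennreal (lam / (s + lam)^2) * indicator {0<..} s)"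
    by (rule density_TZ[OF P fZ0 dZ _ _ pX pY eqZ lam]) measurable
  have aeD: "AE s in lborel. (\<integral>\<^sup>+x. ennreal (fX x) * ennreal (fY (s*x/lam)) * ennreal (x/lam) * indicator {0<..} x \<partial>lborel) * indicator {0<..} s
      = ennreal (fZ (lam / (s + lam))) * ennreal (lam / (s + lam)^2) * indicator {0<..} s"
    using dT dTZ by (intro sigma_finite_measure.density_unique[OF sigma_finite_lborel]) auto
  have Iq_eq: "AE s in lborel. s > 0 \<longrightarrow> Iq s = ennreal (lam\<^sup>2 * F s)"
    using aeD
  proof eventually_elim
    case (elim s)
    show ?case
    proof
      assume s: "s > 0"
      have "(\<integral>\<^sup>+x. ennreal (fX x) * ennreal (fY (s*x/lam)) * ennreal (x/lam) * indicator {0<..} x \<partial>lborel)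
          = (\<integral>\<^sup>+x. ennreal (A (s/lam) / lam) * ennreal (x * hp x * (p + q * s * x / lam) * exp (- s * x)) \<partial>lborel)"
      proof (intro nn_integral_cong)
        fix x :: real
        show "ennreal (fX x) * ennreal (fY (s*x/lam)) * ennreal (x/lam) * indicator {0<..} x
            = ennreal (A (s/lam) / lam) * ennreal (x * hp x * (p + q * s * x / lam) * exp (- s * x))"
        proof (cases "x > 0")
          case True
          have sl: "s / lam > 0" using s lam by simp
          have "fY (s*x/lam) = A (s/lam) * B x * C (s / lam * x)" using fYdec[OF sl True] by simp
          also have "C (s / lam * x) = (p + q * s * x / lam) * exp (- s * x)"
          proof -
            have pos: "s / lam * x > 0" using mult_pos_pos[OF sl True] .
            have e1: "q * (s / lam * x) = q * s * x / lam" by simp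
            have e2: "- lam * (s / lam * x) = - s * x" using lam by simp
            show ?thesis using Cdef[OF pos] unfolding e1 e2 .
          qed
          finally have fy: "fY (s*x/lam) = A (s/lam) * B x * ((p + q * s * x / lam) * exp (- s * x))" .
          have e: "fX x * fY (s*x/lam) * (x/lam) = A (s/lam) / lam * (x * hp x * (p + q * s * x / lam) * exp (- s * x))"
            unfolding fy hpB[OF True] by (simp add: field_simps)
          have n1: "A (s/lam) / lam \<ge> 0" using Apos[of "s/lam"] s lam by simp
          have n2: "x * hp x * (p + q * s * x / lam) * exp (- s * x) \<ge> 0"
            using xhp0[of x] p q lam s True by simp
          have r: "ennreal (fX x * fY (s*x/lam) * (x/lam)) = ennreal (A (s/lam) / lam) * ennreal (x * hp x * (p + q * s * x / lam) * exp (- s * x))"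
            unfolding e by (rule ennreal_mult[OF n1 n2])
          have "ennreal (fX x) * ennreal (fY (s*x/lam)) * ennreal (x/lam) = ennreal (fX x * fY (s*x/lam) * (x/lam))"
          proof -
            have m1: "ennreal (fX x * fY (s*x/lam)) = ennreal (fX x) * ennreal (fY (s*x/lam))"
              by (rule ennreal_mult[OF fX0 fY0])
            have m2: "ennreal (fX x * fY (s*x/lam) * (x/lam)) = ennreal (fX x * fY (s*x/lam)) * ennreal (x/lam)"
              by (rule ennreal_mult) (use True lam fX0[of x] fY0[of "s*x/lam"] in auto)
            show ?thesis unfolding m2 m1 ..
          qed
          then show ?thesis using True r by simp
        next
          case False
          then show ?thesis by (simp add: hp_def)
        qed
      qed
      also have "\<dots> = ennreal (A (s/lam) / lam) * Iq s"
        unfolding Iq_def by (rule nn_integral_cmult) measurable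
      finally have "ennreal (A (s/lam) / lam) * Iq s = ennreal (fZ (lam / (s + lam))) * ennreal (lam / (s + lam)^2)"
        using elim s by simp
      then have "ennreal (lam / A (s/lam)) * (ennreal (A (s/lam) / lam) * Iq s) = ennreal (lam / A (s/lam)) * (ennreal (fZ (lam / (s + lam))) * ennreal (lam / (s + lam)^2))"
        by simp
      moreover have "ennreal (lam / A (s/lam)) * ennreal (A (s/lam) / lam) = 1"
        using Apos[of "s/lam"] s lam by (simp add: ennreal_mult'' [symmetric])
      moreover have "ennreal (lam / A (s/lam)) * (ennreal (fZ (lam / (s + lam))) * ennreal (lam / (s + lam)^2)) = ennreal (lam\<^sup>2 * F s)"
        using Apos[of "s/lam"] s lam fZ0[of "lam / (s + lam)"]
        by (simp add: ennreal_mult'' [symmetric] ennreal_mult[symmetric] F_def power2_eq_square field_simps)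
      ultimately show "Iq s = ennreal (lam\<^sup>2 * F s)" by (simp add: mult.assoc[symmetric])
    qed
  qed

  define J1 where "J1 s = (\<integral>\<^sup>+x. ennreal (p * x * hp x * exp (- s * x)) \<partial>lborel)" for s
  define J2 where "J2 s = (\<integral>\<^sup>+x. ennreal (x\<^sup>2 * hp x * exp (- s * x)) \<partial>lborel)" for s
  have j1n: "p * x * hp x * exp (- s * x) \<ge> 0" for x s
    using mult_nonneg_nonneg[OF mult_nonneg_nonneg[OF p xhp0[of x]] exp_ge_zero[of "- s * x"]] by (simp add: mult.assoc)
  have j2n: "x\<^sup>2 * hp x * exp (- s * x) \<ge> 0" for x s using hp0[of x] by simp
  have Iq_split: "Iq s = J1 s + ennreal (q * s / lam) * J2 s" if s: "s \<ge> 0" for s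
  proof -
    have "Iq s = (\<integral>\<^sup>+x. ennreal (p * x * hp x * exp (- s * x)) + ennreal (q * s / lam) * ennreal (x\<^sup>2 * hp x * exp (- s * x)) \<partial>lborel)"
      unfolding Iq_def
    proof (intro nn_integral_cong)
      fix x :: real
      have eq: "x * hp x * (p + q * s * x / lam) * exp (- s * x) = p * x * hp x * exp (- s * x) + q * s / lam * (x\<^sup>2 * hp x * exp (- s * x))"
        by (simp add: algebra_simps power2_eq_square)
      have nk: "q * s / lam \<ge> 0" using q s lam by simp
      show "ennreal (x * hp x * (p + q * s * x / lam) * exp (- s * x)) = ennreal (p * x * hp x * exp (- s * x)) + ennreal (q * s / lam) * ennreal (x\<^sup>2 * hp x * exp (- s * x))"
        unfolding eq by (simp only: ennreal_plus[OF j1n[of x s] mult_nonneg_nonneg[OF nk j2n[of x s]]] ennreal_mult[OF nk j2n[of x s]])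
    qed
    also have "\<dots> = J1 s + (\<integral>\<^sup>+x. ennreal (q * s / lam) * ennreal (x\<^sup>2 * hp x * exp (- s * x)) \<partial>lborel)"
      unfolding J1_def by (rule nn_integral_add) measurable
    also have "(\<integral>\<^sup>+x. ennreal (q * s / lam) * ennreal (x\<^sup>2 * hp x * exp (- s * x)) \<partial>lborel) = ennreal (q * s / lam) * J2 s"
      unfolding J2_def by (rule nn_integral_cmult) measurable
    finally show ?thesis .
  qed
  have Jmono1: "J1 s \<le> J1 s0" and Jmono2: "J2 s \<le> J2 s0" if "s0 \<le> s" for s s0
  proof -
    have ex: "exp (- s * x) \<le> exp (- s0 * x)" if "x > 0" for x using that \<open>s0 \<le> s\<close> by (simp add: mult_right_mono)
    have le: "hp x * exp (- s * x) \<le> hp x * exp (- s0 * x)" for x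
    proof (cases "x > 0")
      case True then show ?thesis by (intro mult_left_mono ex hp0)
    qed (simp add: hp_def)
    show "J1 s \<le> J1 s0" unfolding J1_def
    proof (intro nn_integral_mono ennreal_leI)
      fix x
      show "p * x * hp x * exp (- s * x) \<le> p * x * hp x * exp (- s0 * x)"
      proof (cases "x > 0")
        case True then show ?thesis using le[of x] p by (simp add: mult.assoc mult_left_mono)
      qed (simp add: hp_def)
    qed
    show "J2 s \<le> J2 s0" unfolding J2_def
    proof (intro nn_integral_mono ennreal_leI)
      fix x
      show "x\<^sup>2 * hp x * exp (- s * x) \<le> x\<^sup>2 * hp x * exp (- s0 * x)"
        using le[of x] by (simp add: mult.assoc mult_left_mono)
    qed
  qed
  have Jfin: "J1 s < \<infinity> \<and> J2 s < \<infinity>" if s: "s > 0" for s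
  proof -
    obtain s0 where s0: "0 < s0" "s0 < s" "Iq s0 = ennreal (lam\<^sup>2 * F s0)"
      using ae_exists_below[OF Iq_eq s] by auto
    have e: "J1 s0 + ennreal (q * s0 / lam) * J2 s0 = ennreal (lam\<^sup>2 * F s0)" using Iq_split[of s0] s0 by simp
    have sp: "J1 s0 + ennreal (q * s0 / lam) * J2 s0 < \<infinity>" unfolding e by simp
    then have f1: "J1 s0 < \<infinity>" and "ennreal (q * s0 / lam) * J2 s0 < \<infinity>" by simp_all
    moreover have "ennreal (q * s0 / lam) \<noteq> 0" using q lam s0 by simp
    ultimately have f2: "J2 s0 < \<infinity>" by (auto simp: ennreal_mult_less_top)
    show ?thesis using Jmono1[of s0 s] Jmono2[of s0 s] s0 f1 f2 by (auto simp: order_le_less_trans)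
  qed

  have lapI: "integrable lborel (\<lambda>t. exp (-s*t) * g t * indicator {0<..} t)"
    and lapV: "(\<integral>t. exp (-s*t) * g t * indicator {0<..} t \<partial>lborel) = F s" if s: "s > 0" for s
  proof -
    have fe: "(\<lambda>t. indicator {0<..} t *\<^sub>R (exp (- s * t) * g t)) = (\<lambda>t. exp (-s*t) * g t * indicator {0<..} t)"
      by (auto simp: fun_eq_iff)
    have "set_integrable lborel {0<..} (\<lambda>t. exp (- s * t) * g t)" "(LINT t:{0<..}|lborel. exp (- s * t) * g t) = F s"
      using lap s unfolding has_laplace_def F_def by auto
    then show "integrable lborel (\<lambda>t. exp (-s*t) * g t * indicator {0<..} t)" "(\<integral>t. exp (-s*t) * g t * indicator {0<..} t \<partial>lborel) = F s"
      unfolding set_integrable_def set_lebesgue_integral_def fe by auto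
  qed
  define gg where "gg t = g t * indicator {0<..} t" for t
  have [measurable]: "gg \<in> borel_measurable borel"
  proof -
    have "(\<lambda>t. exp (-1*t) * g t * indicator {0<..} t) \<in> borel_measurable lborel"
    proof -
      have "integrable lborel (\<lambda>t. exp (-1*t) * g t * indicator {0<..} t)" using lapI[of 1] by simp
      then show ?thesis by (rule borel_measurable_integrable)
    qed
    then have m: "(\<lambda>t. exp (-1*t) * g t * indicator {0<..} t) \<in> borel_measurable borel" by simp
    have "gg = (\<lambda>t. exp t * (exp (-1*t) * g t * indicator {0<..} t))"
      by (auto simp: fun_eq_iff gg_def exp_minus field_simps)
    then show ?thesis using m by simp
  qed
  define ggp where "ggp t = max 0 (gg t)" for t
  define ggn where "ggn t = max 0 (- gg t)" for t
  have [measurable]: "ggp \<in> borel_measurable borel" "ggn \<in> borel_measurable borel"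
    unfolding ggp_def ggn_def by measurable
  have ggp0: "ggp t \<ge> 0" and ggn0: "ggn t \<ge> 0" for t unfolding ggp_def ggn_def by auto
  have gpn_fin: "(\<integral>\<^sup>+\<xi>. ennreal (ggp \<xi> * exp (-s*\<xi>) * indicator {0<..} \<xi>) \<partial>lborel) < \<infinity> \<and>
                 (\<integral>\<^sup>+\<xi>. ennreal (ggn \<xi> * exp (-s*\<xi>) * indicator {0<..} \<xi>) \<partial>lborel) < \<infinity>" if s: "s > 0" for s
  proof -
    have b: "(\<integral>\<^sup>+\<xi>. ennreal (norm (exp (-s*\<xi>) * g \<xi> * indicator {0<..} \<xi>)) \<partial>lborel) < \<infinity>"
      using lapI[OF s] unfolding integrable_iff_bounded by auto
    have "(\<integral>\<^sup>+\<xi>. ennreal (ggp \<xi> * exp (-s*\<xi>) * indicator {0<..} \<xi>) \<partial>lborel) \<le> (\<integral>\<^sup>+\<xi>. ennreal (norm (exp (-s*\<xi>) * g \<xi> * indicator {0<..} \<xi>)) \<partial>lborel)"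
      by (intro nn_integral_mono ennreal_leI) (auto simp: ggp_def gg_def indicator_def abs_mult)
    moreover have "(\<integral>\<^sup>+\<xi>. ennreal (ggn \<xi> * exp (-s*\<xi>) * indicator {0<..} \<xi>) \<partial>lborel) \<le> (\<integral>\<^sup>+\<xi>. ennreal (norm (exp (-s*\<xi>) * g \<xi> * indicator {0<..} \<xi>)) \<partial>lborel)"
      by (intro nn_integral_mono ennreal_leI) (auto simp: ggn_def gg_def indicator_def abs_mult)
    ultimately show ?thesis using b by (auto simp: order_le_less_trans)
  qed
  have gdiff: "(\<integral>\<xi>. ggp \<xi> * exp (-s*\<xi>) * indicator {0<..} \<xi> \<partial>lborel) - (\<integral>\<xi>. ggn \<xi> * exp (-s*\<xi>) * indicator {0<..} \<xi> \<partial>lborel) = F s"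
    if s: "s > 0" for s
  proof -
    have i1: "integrable lborel (\<lambda>\<xi>. ggp \<xi> * exp (-s*\<xi>) * indicator {0<..} \<xi>)"
      using lap_cum(1)[OF _ ggp0 s] gpn_fin[OF s] by simp
    have i2: "integrable lborel (\<lambda>\<xi>. ggn \<xi> * exp (-s*\<xi>) * indicator {0<..} \<xi>)"
      using lap_cum(1)[OF _ ggn0 s] gpn_fin[OF s] by simp
    have "(\<integral>\<xi>. ggp \<xi> * exp (-s*\<xi>) * indicator {0<..} \<xi> \<partial>lborel) - (\<integral>\<xi>. ggn \<xi> * exp (-s*\<xi>) * indicator {0<..} \<xi> \<partial>lborel)
        = (\<integral>\<xi>. ggp \<xi> * exp (-s*\<xi>) * indicator {0<..} \<xi> - ggn \<xi> * exp (-s*\<xi>) * indicator {0<..} \<xi> \<partial>lborel)"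
      by (rule Bochner_Integration.integral_diff[OF i1 i2, symmetric])
    also have "\<dots> = (\<integral>t. exp (-s*t) * g t * indicator {0<..} t \<partial>lborel)"
      by (intro Bochner_Integration.integral_cong) (auto simp: ggp_def ggn_def gg_def indicator_def max_def)
    finally show ?thesis using lapV[OF s] by simp
  qed

  define Cp where "Cp t = enn2real (\<integral>\<^sup>+\<xi>. ennreal (ggp \<xi> * indicator {0<..t} \<xi>) \<partial>lborel)" for t
  define Cn where "Cn t = enn2real (\<integral>\<^sup>+\<xi>. ennreal (ggn \<xi> * indicator {0<..t} \<xi>) \<partial>lborel)" for t
  define U where "U t = enn2real (\<integral>\<^sup>+\<xi>. ennreal (p * \<xi> * hp \<xi> * indicator {0<..t} \<xi>) \<partial>lborel)" for t
  define \<phi> where "\<phi> t = c * (Cp t - Cn t) - lam / q * U t - t\<^sup>2 * hp t" for t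
  have pxh0: "p * \<xi> * hp \<xi> \<ge> 0" for \<xi> using mult_nonneg_nonneg[OF p xhp0[of \<xi>]] by (simp add: mult.assoc)
  have [measurable]: "Cp \<in> borel_measurable borel" "Cn \<in> borel_measurable borel" "U \<in> borel_measurable borel"
    unfolding Cp_def Cn_def U_def by measurable
  have [measurable]: "\<phi> \<in> borel_measurable borel" unfolding \<phi>_def by measurable
  define Lp where "Lp s = (\<integral>\<xi>. ggp \<xi> * exp (-s*\<xi>) * indicator {0<..} \<xi> \<partial>lborel)" for s
  define Ln where "Ln s = (\<integral>\<xi>. ggn \<xi> * exp (-s*\<xi>) * indicator {0<..} \<xi> \<partial>lborel)" for s
  define K1 where "K1 s = (\<integral>\<xi>. p * \<xi> * hp \<xi> * exp (-s*\<xi>) * indicator {0<..} \<xi> \<partial>lborel)" for s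
  define K2 where "K2 s = (\<integral>t. exp (-s*t) * (t\<^sup>2 * hp t) * indicator {0<..} t \<partial>lborel)" for s
  have LCp: "integrable lborel (\<lambda>t. exp (-s*t) * Cp t * indicator {0<..} t)"
    "(\<integral>t. exp (-s*t) * Cp t * indicator {0<..} t \<partial>lborel) = Lp s / s" if s: "s > 0" for s
    using lap_cum(2,3)[OF _ ggp0 s] gpn_fin[OF s] unfolding Cp_def Lp_def by auto
  have LCn: "integrable lborel (\<lambda>t. exp (-s*t) * Cn t * indicator {0<..} t)"
    "(\<integral>t. exp (-s*t) * Cn t * indicator {0<..} t \<partial>lborel) = Ln s / s" if s: "s > 0" for s
    using lap_cum(2,3)[OF _ ggn0 s] gpn_fin[OF s] unfolding Cn_def Ln_def by auto
  have J1eq: "(\<integral>\<^sup>+\<xi>. ennreal (p * \<xi> * hp \<xi> * exp (-s*\<xi>) * indicator {0<..} \<xi>) \<partial>lborel) = J1 s" for s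
    unfolding J1_def by (intro nn_integral_cong) (auto simp: hp_def indicator_def)
  have LU: "integrable lborel (\<lambda>t. exp (-s*t) * U t * indicator {0<..} t)"
    "(\<integral>t. exp (-s*t) * U t * indicator {0<..} t \<partial>lborel) = K1 s / s" if s: "s > 0" for s
    using lap_cum(2,3)[OF _ pxh0 s] Jfin[OF s] J1eq[of s] unfolding U_def K1_def by auto
  have K1int: "integrable lborel (\<lambda>\<xi>. p * \<xi> * hp \<xi> * exp (-s*\<xi>) * indicator {0<..} \<xi>)"
    and K1e: "J1 s = ennreal (K1 s)" if s: "s > 0" for s
  proof -
    have f: "(\<integral>\<^sup>+\<xi>. ennreal (p * \<xi> * hp \<xi> * exp (-s*\<xi>) * indicator {0<..} \<xi>) \<partial>lborel) < \<infinity>"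
      using Jfin[OF s] J1eq[of s] by simp
    have n: "p * \<xi> * hp \<xi> * exp (-s*\<xi>) * indicator {0<..} \<xi> \<ge> 0" for \<xi>
      using pxh0[of \<xi>] by simp
    show "integrable lborel (\<lambda>\<xi>. p * \<xi> * hp \<xi> * exp (-s*\<xi>) * indicator {0<..} \<xi>)"
      by (rule nn_fin_integrable(1)[OF _ n f]) measurable
    show "J1 s = ennreal (K1 s)"
      using nn_fin_integrable(2)[OF _ n f] J1eq[of s] unfolding K1_def by simp
  qed
  have K2int: "integrable lborel (\<lambda>t. exp (-s*t) * (t\<^sup>2 * hp t) * indicator {0<..} t)"
    and K2e: "J2 s = ennreal (K2 s)" if s: "s > 0" for s
  proof -
    have J2eq: "(\<integral>\<^sup>+t. ennreal (exp (-s*t) * (t\<^sup>2 * hp t) * indicator {0<..} t) \<partial>lborel) = J2 s"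
      unfolding J2_def by (intro nn_integral_cong) (auto simp: hp_def indicator_def mult_ac)
    have f: "(\<integral>\<^sup>+t. ennreal (exp (-s*t) * (t\<^sup>2 * hp t) * indicator {0<..} t) \<partial>lborel) < \<infinity>"
      using Jfin[OF s] J2eq by simp
    have n: "exp (-s*t) * (t\<^sup>2 * hp t) * indicator {0<..} t \<ge> 0" for t
      using hp0[of t] by simp
    show "integrable lborel (\<lambda>t. exp (-s*t) * (t\<^sup>2 * hp t) * indicator {0<..} t)"
      by (rule nn_fin_integrable(1)[OF _ n f]) measurable
    show "J2 s = ennreal (K2 s)"
      using nn_fin_integrable(2)[OF _ n f] J2eq unfolding K2_def by simp
  qed
  have Lphi: "set_integrable lborel {0<..} (\<lambda>t. exp (-s*t) * \<phi> t) \<and>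
      (LINT t:{0<..}|lborel. exp (-s*t) * \<phi> t) = c * (Lp s / s - Ln s / s) - lam / q * (K1 s / s) - K2 s"
    if s: "s > 0" for s
  proof -
    have fe: "(\<lambda>t. indicator {0<..} t *\<^sub>R (exp (-s*t) * \<phi> t)) =
      (\<lambda>t. c * (exp (-s*t) * Cp t * indicator {0<..} t) - c * (exp (-s*t) * Cn t * indicator {0<..} t)
           - lam / q * (exp (-s*t) * U t * indicator {0<..} t) - exp (-s*t) * (t\<^sup>2 * hp t) * indicator {0<..} t)"
      by (auto simp: fun_eq_iff \<phi>_def indicator_def algebra_simps)
    have i: "integrable lborel (\<lambda>t. c * (exp (-s*t) * Cp t * indicator {0<..} t) - c * (exp (-s*t) * Cn t * indicator {0<..} t)
           - lam / q * (exp (-s*t) * U t * indicator {0<..} t) - exp (-s*t) * (t\<^sup>2 * hp t) * indicator {0<..} t)"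
      using LCp(1)[OF s] LCn(1)[OF s] LU(1)[OF s] K2int[OF s] by auto
    show ?thesis
      unfolding set_integrable_def set_lebesgue_integral_def fe
      using i LCp[OF s] LCn[OF s] LU[OF s] K2int[OF s] s q
      by (simp add: K2_def) (simp add: field_simps)
  qed

  have K1n: "K1 s \<ge> 0" for s unfolding K1_def using pxh0 by (intro integral_nonneg_AE AE_I2) simp
  have K2n: "K2 s \<ge> 0" for s unfolding K2_def using hp0 by (intro integral_nonneg_AE AE_I2) simp
  have aeL: "AE s in lborel. s > 0 \<longrightarrow> (LINT t:{0<..}|lborel. exp (-s*t) * \<phi> t) = 0"
    using Iq_eq
  proof eventually_elim
    case (elim s)
    show ?case
    proof
      assume s: "s > 0"
      have Fn: "F s \<ge> 0" using Apos[of "s/lam"] s lam fZ0[of "lam / (s + lam)"] by (simp add: F_def)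
      have "ennreal (K1 s + q * s / lam * K2 s) = ennreal (K1 s) + ennreal (q * s / lam) * ennreal (K2 s)"
      proof -
        have nk: "q * s / lam \<ge> 0" using s q lam by simp
        show ?thesis by (simp only: ennreal_plus[OF K1n mult_nonneg_nonneg[OF nk K2n]] ennreal_mult[OF nk K2n])
      qed
      also have "\<dots> = Iq s" using Iq_split[of s] K1e[OF s] K2e[OF s] s by simp
      also have "\<dots> = ennreal (lam\<^sup>2 * F s)" using elim s by simp
      finally have "K1 s + q * s / lam * K2 s = lam\<^sup>2 * F s"
        using K1n[of s] K2n[of s] s q lam Fn by (subst (asm) ennreal_inj) auto
      then have k1: "K1 s = lam\<^sup>2 * F s - q * s / lam * K2 s" by simp
      have "(LINT t:{0<..}|lborel. exp (-s*t) * \<phi> t) = c * (Lp s / s - Ln s / s) - lam / q * (K1 s / s) - K2 s"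
        using Lphi[OF s] by simp
      also have "Lp s / s - Ln s / s = F s / s"
      proof -
        have "Lp s - Ln s = F s" using gdiff[OF s] unfolding Lp_def Ln_def .
        then show ?thesis by (metis diff_divide_distrib)
      qed
      also have "c * (F s / s) - lam / q * (K1 s / s) - K2 s = 0"
        unfolding k1 c_def using s q lam by (simp add: field_simps power2_eq_square power3_eq_cube)
      finally show "(LINT t:{0<..}|lborel. exp (-s*t) * \<phi> t) = 0" .
    qed
  qed
  have phi0: "AE t in lborel. t > 0 \<longrightarrow> \<phi> t = 0"
    by (rule lerch_laplace[OF _ _ aeL]) (use Lphi in auto)

  have finp: "(\<integral>\<^sup>+\<xi>. ennreal (ggp \<xi> * indicator {0<..x} \<xi>) \<partial>lborel) < \<infinity>" for x
    using cum_fin[OF _ ggp0, where s=1 and t=x] gpn_fin[of 1] by simp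
  have finn: "(\<integral>\<^sup>+\<xi>. ennreal (ggn \<xi> * indicator {0<..x} \<xi>) \<partial>lborel) < \<infinity>" for x
    using cum_fin[OF _ ggn0, where s=1 and t=x] gpn_fin[of 1] by simp
  have finu: "(\<integral>\<^sup>+\<xi>. ennreal (p * \<xi> * hp \<xi> * indicator {0<..x} \<xi>) \<partial>lborel) < \<infinity>" for x
    using cum_fin[OF _ pxh0, where s=1 and t=x] Jfin[of 1] J1eq[of 1] by simp
  have main: "c * (LINT \<xi>:{0<..x}|lborel. \<xi> powr a * g \<xi>) = x powr a * (c * (Cp x - Cn x) - lam / q * U x)"
    if x: "x > 0" for x
  proof -
    define P1 where "P1 = (\<integral>\<xi>. ggp \<xi> * \<xi> powr a * indicator {0<..x} \<xi> \<partial>lborel)"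
    define Q1 where "Q1 = (\<integral>t. a * t powr (a-1) * Cp t * indicator {0<..x} t \<partial>lborel)"
    define P2 where "P2 = (\<integral>\<xi>. ggn \<xi> * \<xi> powr a * indicator {0<..x} \<xi> \<partial>lborel)"
    define Q2 where "Q2 = (\<integral>t. a * t powr (a-1) * Cn t * indicator {0<..x} t \<partial>lborel)"
    define P3 where "P3 = (\<integral>\<xi>. p * \<xi> * hp \<xi> * \<xi> powr a * indicator {0<..x} \<xi> \<partial>lborel)"
    define Q3 where "Q3 = (\<integral>t. a * t powr (a-1) * U t * indicator {0<..x} t \<partial>lborel)"
    note pc1 = pow_cum[OF _ ggp0 a0 x finp, folded Cp_def]
    note pc2 = pow_cum[OF _ ggn0 a0 x finn, folded Cn_def]
    note pc3 = pow_cum[OF _ pxh0 a0 x finu, folded U_def]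
    have e1: "P1 + Q1 = x powr a * Cp x" using pc1(3) unfolding P1_def Q1_def by simp
    have e2: "P2 + Q2 = x powr a * Cn x" using pc2(3) unfolding P2_def Q2_def by simp
    have e3: "P3 + Q3 = x powr a * U x" using pc3(3) unfolding P3_def Q3_def by simp
    have iQ2: "integrable lborel (\<lambda>t. a * t powr (a-1) * Cn t * indicator {0<..x} t)" using pc2(2) by simp
    have iQ3: "integrable lborel (\<lambda>t. a * t powr (a-1) * U t * indicator {0<..x} t)" using pc3(2) by simp
    have iP3: "integrable lborel (\<lambda>\<xi>. p * \<xi> * hp \<xi> * \<xi> powr a * indicator {0<..x} \<xi>)" using pc3(1) by simp
    have "c * Q1 = (\<integral>t. c * (a * t powr (a-1) * Cp t * indicator {0<..x} t) \<partial>lborel)"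
      unfolding Q1_def by simp
    also have "\<dots> = (\<integral>t. c * (a * t powr (a-1) * Cn t * indicator {0<..x} t) + lam / q * (a * t powr (a-1) * U t * indicator {0<..x} t)
                        + lam / q * (p * t * hp t * t powr a * indicator {0<..x} t) \<partial>lborel)"
    proof (rule integral_cong_AE)
      show "AE t in lborel. c * (a * t powr (a-1) * Cp t * indicator {0<..x} t) =
              c * (a * t powr (a-1) * Cn t * indicator {0<..x} t) + lam / q * (a * t powr (a-1) * U t * indicator {0<..x} t)
                        + lam / q * (p * t * hp t * t powr a * indicator {0<..x} t)"
        using phi0
      proof eventually_elim
        case (elim t)
        show ?case
        proof (cases "0 < t \<and> t \<le> x")
          case True
          then have "\<phi> t = 0" using elim by simp
          then have cp: "c * Cp t = c * Cn t + lam / q * U t + t\<^sup>2 * hp t" unfolding \<phi>_def by (simp add: algebra_simps)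
          have tp: "t powr (a-1) * t\<^sup>2 = t * t powr a"
            using True by (simp add: powr_diff power2_eq_square)
          have "c * (a * t powr (a-1) * Cp t) = a * t powr (a-1) * (c * Cp t)" by simp
          also have "\<dots> = c * (a * t powr (a-1) * Cn t) + lam / q * (a * t powr (a-1) * U t) + a * (t powr (a-1) * t\<^sup>2) * hp t"
            unfolding cp by (simp add: algebra_simps)
          also have "a * (t powr (a-1) * t\<^sup>2) * hp t = lam / q * (p * t * hp t * t powr a)"
            unfolding tp by (simp add: a_def)
          finally show ?thesis using True by (simp add: indicator_def)
        qed (auto simp: indicator_def)
      qed
    qed measurable
    also have "\<dots> = c * Q2 + lam / q * Q3 + lam / q * P3"
      using iQ2 iQ3 iP3 unfolding Q2_def Q3_def P3_def by simp
    finally have qq: "c * Q1 = c * Q2 + lam / q * Q3 + lam / q * P3" .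
    have "(LINT \<xi>:{0<..x}|lborel. \<xi> powr a * g \<xi>) = (\<integral>\<xi>. ggp \<xi> * \<xi> powr a * indicator {0<..x} \<xi> - ggn \<xi> * \<xi> powr a * indicator {0<..x} \<xi> \<partial>lborel)"
      unfolding set_lebesgue_integral_def
      by (intro Bochner_Integration.integral_cong) (auto simp: ggp_def ggn_def gg_def indicator_def max_def)
    also have "\<dots> = P1 - P2"
      unfolding P1_def P2_def by (rule Bochner_Integration.integral_diff) (use pc1(1) pc2(1) in auto)
    finally have L: "(LINT \<xi>:{0<..x}|lborel. \<xi> powr a * g \<xi>) = P1 - P2" .
    have p1: "P1 = x powr a * Cp x - Q1" using e1 by linarith
    have p2: "P2 = x powr a * Cn x - Q2" using e2 by linarith
    have "c * (P1 - P2) = c * (x powr a * (Cp x - Cn x)) - (c * Q1 - c * Q2)"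
      unfolding p1 p2 by (simp add: algebra_simps)
    also have "c * Q1 - c * Q2 = lam / q * (P3 + Q3)" using qq by (simp add: algebra_simps add_divide_distrib)
    also have "P3 + Q3 = x powr a * U x" by (rule e3)
    finally show ?thesis unfolding L by (simp add: algebra_simps)
  qed
  show ?thesis
    using phi0
  proof eventually_elim
    case (elim x)
    show ?case
    proof
      assume x: "x > 0"
      have ph: "c * (Cp x - Cn x) - lam / q * U x = x\<^sup>2 * hp x" using elim x unfolding \<phi>_def by simp
      have m: "c * (LINT \<xi>:{0<..x}|lborel. \<xi> powr a * g \<xi>) = x powr a * x\<^sup>2 * B x * fX x"
        using main[OF x] unfolding ph hpB[OF x] by (simp add: mult_ac)
      have xp: "x powr (a + 2) = x powr a * x\<^sup>2" using x by (simp add: powr_add)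
      have Bx: "B x > 0" using Bpos[OF x] .
      have "lam ^ 3 / (q * x powr (a + 2) * B x) * (LINT \<xi>:{0<..x}|lborel. \<xi> powr a * g \<xi>)
          = (c * (LINT \<xi>:{0<..x}|lborel. \<xi> powr a * g \<xi>)) / (x powr (a + 2) * B x)"
        unfolding c_def by simp
      also have "\<dots> = fX x" unfolding m xp using x Bx by simp
      finally show "fX x = lam ^ 3 / (q * x powr (lam * p / q + 2) * B x) * (LINT \<xi>:{0<..x}|lborel. \<xi> powr (lam * p / q) * g \<xi>)"
        unfolding a_def by simp
    qed
  qed
qed


end
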